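(* Suppose that $A_1,\dots,A_d$ are continuous functions of bounded variation on $[0,1]$, $f\in C[0,1]$, and $g_1,\dots,g_d\in C([0,1]\times\mathbb{R})$ satisfy a linear growth condition, i.e. there is $c\ge0$ with $|g_i(t,\xi)|\le c(1+|\xi|)$ for all $i$, $t\in[0,1]$, $\xi\in\mathbb{R}$. Then there exists at least one solution $B\in C[0,1]$ of the Stieltjes integral equation $$B(t)=f(t)+\sum_{i=1}^d\int_0^tg_i(s,B(s))\,dA_i(s),\qquad 0\le t\le1.$$ Moreover, this solution is unique if $g_1,\dots,g_d$ in addition satisfy a local Lipschitz condition: for each $p>0$ there is $L_p\ge0$ with $|g_i(t,\xi)-g_i(t,\zeta)|\le L_p|\xi-\zeta|$ for all $i$, $\xi,\zeta\in[-p,p]$, $t\in[0,1]$.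
   Context: The integrals are Riemann--Stieltjes integrals. *)

theory Defs
  imports "HOL-Analysis.Analysis"
begin

definition is_partition :: "real \<Rightarrow> real \<Rightarrow> nat \<Rightarrow> (nat \<Rightarrow> real) \<Rightarrow> bool" where
  "is_partition a b n x \<longleftrightarrow> x 0 = a \<and> x n = b \<and> (\<forall>k<n. x k \<le> x (Suc k))"

definition bounded_variation_on :: "(real \<Rightarrow> real) \<Rightarrow> real \<Rightarrow> real \<Rightarrow> bool" where
  "bounded_variation_on A a b \<longleftrightarrow>
     (\<exists>M. \<forall>n x. is_partition a b n x \<longrightarrow> (\<Sum>k<n. \<bar>A (x (Suc k)) - A (x k)\<bar>) \<le> M)"

definition has_RS_integral :: "(real \<Rightarrow> real) \<Rightarrow> (real \<Rightarrow> real) \<Rightarrow> real \<Rightarrow> real \<Rightarrow> real \<Rightarrow> bool" where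
  "has_RS_integral f A a b I \<longleftrightarrow>
     (\<forall>\<epsilon>>0. \<exists>\<delta>>0. \<forall>n x \<xi>. is_partition a b n x \<and> (\<forall>k<n. x (Suc k) - x k < \<delta>)
        \<and> (\<forall>k<n. x k \<le> \<xi> k \<and> \<xi> k \<le> x (Suc k))
        \<longrightarrow> \<bar>(\<Sum>k<n. f (\<xi> k) * (A (x (Suc k)) - A (x k))) - I\<bar> < \<epsilon>)"

definition RS_integrable :: "(real \<Rightarrow> real) \<Rightarrow> (real \<Rightarrow> real) \<Rightarrow> real \<Rightarrow> real \<Rightarrow> bool" where
  "RS_integrable f A a b \<longleftrightarrow> (\<exists>I. has_RS_integral f A a b I)"

definition RS_integral :: "(real \<Rightarrow> real) \<Rightarrow> (real \<Rightarrow> real) \<Rightarrow> real \<Rightarrow> real \<Rightarrow> real" where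
  "RS_integral f A a b = (THE I. has_RS_integral f A a b I)"

definition is_solution ::
  "nat \<Rightarrow> (nat \<Rightarrow> real \<Rightarrow> real) \<Rightarrow> (real \<Rightarrow> real) \<Rightarrow> (nat \<Rightarrow> real \<Rightarrow> real \<Rightarrow> real) \<Rightarrow> (real \<Rightarrow> real) \<Rightarrow> bool" where
  "is_solution d A f g B \<longleftrightarrow>
     (\<forall>t\<in>{0..1}. (\<forall>i<d. RS_integrable (\<lambda>s. g i s (B s)) (A i) 0 t) \<and>
        B t = f t + (\<Sum>i<d. RS_integral (\<lambda>s. g i s (B s)) (A i) 0 t))"

end

theory Submission
  imports Defs "HOL-Complex_Analysis.Great_Picard"
begin

definition psum :: "(real\<Rightarrow>real) \<Rightarrow> nat \<Rightarrow> (nat\<Rightarrow>real) \<Rightarrow> real" where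
  "psum A n x = (\<Sum>k<n. \<bar>A (x (Suc k)) - A (x k)\<bar>)"

definition var :: "(real\<Rightarrow>real) \<Rightarrow> real \<Rightarrow> real \<Rightarrow> real" where
  "var A a b = Sup {psum A n x | n x. is_partition a b n x}"

lemma partition_mono:
  assumes "is_partition a b n x" "j \<le> k" "k \<le> n"
  shows "x j \<le> x k"
  using assms(2,3)
proof (induction k)
  case 0 then show ?case by simp
next
  case (Suc k)
  show ?case
  proof (cases "j = Suc k")
    case False
    then have "x j \<le> x k" using Suc by simp
    moreover have "x k \<le> x (Suc k)" using assms(1) Suc(3) unfolding is_partition_def by simp
    ultimately show ?thesis by simp
  qed simp
qed

lemma partition_range:
  assumes "is_partition a b n x" "k \<le> n"
  shows "a \<le> x k" "x k \<le> b"
  using partition_mono[OF assms(1), of 0 k] partition_mono[OF assms(1), of k n] assms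
  unfolding is_partition_def by auto

lemma psum_nonneg: "0 \<le> psum A n x"
  unfolding psum_def by (simp add: sum_nonneg)

lemma partition_triv: "a \<le> b \<Longrightarrow> is_partition a b 1 (\<lambda>k. if k = 0 then a else b)"
  unfolding is_partition_def by auto

lemma psum_triv: "psum A 1 (\<lambda>k. if k = 0 then a else b) = \<bar>A b - A a\<bar>"
  unfolding psum_def by simp

lemma partition_concat:
  assumes "is_partition a b n x" "is_partition b c m y"
  shows "is_partition a c (n+m) (\<lambda>k. if k \<le> n then x k else y (k-n))"
    and "psum A (n+m) (\<lambda>k. if k \<le> n then x k else y (k-n)) = psum A n x + psum A m y"
proof -
  let ?z = "(\<lambda>k. if k \<le> n then x k else y (k-n))"
  have z: "?z (n + j) = y j" for j
    using assms unfolding is_partition_def by auto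
  show "is_partition a c (n+m) ?z"
    unfolding is_partition_def
  proof (intro conjI allI impI)
    show "?z 0 = a" using assms unfolding is_partition_def by auto
    show "?z (n+m) = c" using z[of m] assms unfolding is_partition_def by simp
    fix k assume k: "k < n + m"
    show "?z k \<le> ?z (Suc k)"
    proof (cases "k < n")
      case True then show ?thesis using assms unfolding is_partition_def by auto
    next
      case False
      define j where "j = k - n"
      have j: "k = n + j" "j < m" using k False unfolding j_def by auto
      have "y j \<le> y (Suc j)" using assms(2) j(2) unfolding is_partition_def by simp
      then show ?thesis using z[of j] z[of "Suc j"] j(1) assms unfolding is_partition_def by auto
    qed
  qed
  have "psum A (n+j) ?z = psum A n x + psum A j y" if "j \<le> m" for j
    using that
  proof (induction j)
    case 0
    show ?case unfolding psum_def by (simp add: psum_def)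
  next
    case (Suc j)
    have "psum A (n + Suc j) ?z = psum A (n+j) ?z + \<bar>A (?z (Suc (n+j))) - A (?z (n+j))\<bar>"
      unfolding psum_def by simp
    also have "\<dots> = psum A n x + psum A j y + \<bar>A (y (Suc j)) - A (y j)\<bar>"
      using Suc z[of j] z[of "Suc j"] by simp
    finally show ?case unfolding psum_def by simp
  qed
  then show "psum A (n+m) ?z = psum A n x + psum A m y" by simp
qed

lemma partition_split:
  assumes "is_partition a c n x" "a \<le> b" "b \<le> c"
  shows "is_partition a b n (\<lambda>k. min (x k) b)" "is_partition b c n (\<lambda>k. max (x k) b)"
    "psum A n x \<le> psum A n (\<lambda>k. min (x k) b) + psum A n (\<lambda>k. max (x k) b)"
proof -
  show "is_partition a b n (\<lambda>k. min (x k) b)" "is_partition b c n (\<lambda>k. max (x k) b)"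
    using assms unfolding is_partition_def by (auto simp: min_def max_def)
  have t: "\<bar>A (x (Suc k)) - A (x k)\<bar> \<le> \<bar>A (min (x (Suc k)) b) - A (min (x k) b)\<bar>
     + \<bar>A (max (x (Suc k)) b) - A (max (x k) b)\<bar>" if "k < n" for k
  proof -
    have le: "x k \<le> x (Suc k)" using assms(1) that unfolding is_partition_def by auto
    show ?thesis
    proof (cases "x (Suc k) \<le> b")
      case True then show ?thesis using le by (simp add: min_def max_def)
    next
      case F: False
      show ?thesis
      proof (cases "x k \<ge> b")
        case True then show ?thesis using le F by (simp add: min_def max_def)
      next
        case False then show ?thesis using F by (simp add: min_def max_def)
      qed
    qed
  qed
  show "psum A n x \<le> psum A n (\<lambda>k. min (x k) b) + psum A n (\<lambda>k. max (x k) b)"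
    unfolding psum_def sum.distrib[symmetric] by (rule sum_mono) (use t in auto)
qed

locale bvfun =
  fixes A :: "real \<Rightarrow> real" and M :: real
  assumes bound: "\<And>n x. is_partition 0 1 n x \<Longrightarrow> psum A n x \<le> M"
begin

lemma psum_bound:
  assumes "0 \<le> a" "a \<le> b" "b \<le> 1" "is_partition a b n x"
  shows "psum A n x \<le> M"
proof -
  have p1: "is_partition 0 a 1 (\<lambda>k. if k = 0 then 0 else a)" using partition_triv assms by auto
  have p3: "is_partition b 1 1 (\<lambda>k. if k = 0 then b else 1)" using partition_triv assms by auto
  note c1 = partition_concat[OF p1 assms(4)]
  note c2 = partition_concat[OF c1(1) p3]
  have "psum A n x \<le> psum A 1 (\<lambda>k. if k = 0 then 0 else a) + psum A n x + psum A 1 (\<lambda>k. if k = 0 then b else 1)"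
    using psum_nonneg[of A 1 "\<lambda>k. if k = 0 then 0 else a"] psum_nonneg[of A 1 "\<lambda>k. if k = 0 then b else 1"] by linarith
  also have "\<dots> \<le> M" using c1(2)[of A] c2(2)[of A] bound[OF c2(1)] by simp
  finally show ?thesis .
qed

lemma var_bdd:
  assumes "0 \<le> a" "a \<le> b" "b \<le> 1"
  shows "bdd_above {psum A n x | n x. is_partition a b n x}"
  using psum_bound[OF assms] unfolding bdd_above_def by auto

lemma var_ge:
  assumes "0 \<le> a" "a \<le> b" "b \<le> 1" "is_partition a b n x"
  shows "psum A n x \<le> var A a b"
  unfolding var_def by (rule cSup_upper) (use var_bdd[OF assms(1-3)] assms(4) in auto)

lemma var_ne: "a \<le> b \<Longrightarrow> {psum A n x | n x. is_partition a b n x} \<noteq> {}"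
  using partition_triv by blast

lemma var_diff:
  assumes "0 \<le> a" "a \<le> b" "b \<le> 1"
  shows "\<bar>A b - A a\<bar> \<le> var A a b"
  using var_ge[OF assms partition_triv[OF assms(2)]] psum_triv[of A a b] by simp

lemma var_nonneg:
  assumes "0 \<le> a" "a \<le> b" "b \<le> 1"
  shows "0 \<le> var A a b"
  using var_diff[OF assms] by linarith

lemma var_add_le:
  assumes "0 \<le> a" "a \<le> b" "b \<le> c" "c \<le> 1"
  shows "var A a b + var A b c \<le> var A a c"
proof -
  have cc: "psum A n x + psum A m y \<le> var A a c" if "is_partition a b n x" "is_partition b c m y" for n x m y
    using partition_concat(2)[OF that, of A] var_ge[OF _ _ _ partition_concat(1)[OF that]] assms by auto
  then have "psum A n x \<le> var A a c - var A b c" if "is_partition a b n x" for n x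
  proof -
    have "var A b c \<le> var A a c - psum A n x"
      unfolding var_def[of A b c]
    proof (rule cSup_least)
      show "{psum A n x |n x. is_partition b c n x} \<noteq> {}" using var_ne[of b c] assms by simp
      fix s assume "s \<in> {psum A n x |n x. is_partition b c n x}"
      then show "s \<le> var A a c - psum A n x" using cc[OF that] by (auto simp: algebra_simps)
    qed
    then show ?thesis by simp
  qed
  then have "var A a b \<le> var A a c - var A b c"
    unfolding var_def[of A a b]
    by (intro cSup_least) (use var_ne[of a b] assms in auto)
  then show ?thesis by simp
qed

lemma var_add_ge:
  assumes "0 \<le> a" "a \<le> b" "b \<le> c" "c \<le> 1"
  shows "var A a c \<le> var A a b + var A b c"
  unfolding var_def[of A a c]
proof (rule cSup_least)
  show "{psum A n x | n x. is_partition a c n x} \<noteq> {}" using var_ne assms by auto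
  fix s assume "s \<in> {psum A n x | n x. is_partition a c n x}"
  then obtain n x where s: "s = psum A n x" and p: "is_partition a c n x" by auto
  note sp = partition_split[OF p assms(2,3)]
  have "psum A n (\<lambda>k. min (x k) b) \<le> var A a b" by (rule var_ge[OF _ _ _ sp(1)]) (use assms in auto)
  moreover have "psum A n (\<lambda>k. max (x k) b) \<le> var A b c" by (rule var_ge[OF _ _ _ sp(2)]) (use assms in auto)
  ultimately show "s \<le> var A a b + var A b c"
    using s sp(3)[of A] by linarith
qed

lemma var_add:
  assumes "0 \<le> a" "a \<le> b" "b \<le> c" "c \<le> 1"
  shows "var A a c = var A a b + var A b c"
  using var_add_le[OF assms] var_add_ge[OF assms] by simp

lemma var_refl: "0 \<le> a \<Longrightarrow> a \<le> 1 \<Longrightarrow> var A a a = 0"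
  using var_add[of a a a] var_nonneg[of a a] by simp

end

lemma two_valued_psum:
  assumes yv: "\<And>k. k \<le> n \<Longrightarrow> y k = p \<or> y k = q" and pq: "p < q"
    and ym: "\<And>k. k < n \<Longrightarrow> y k \<le> y (Suc k)" and y0: "y 0 = p" and yn: "y n = q"
  shows "psum A n y = \<bar>A q - A p\<bar>"
proof -
  define c where "c = \<bar>A q - A p\<bar> / (q - p)"
  have t: "\<bar>A (y (Suc k)) - A (y k)\<bar> = c * (y (Suc k) - y k)" if "k < n" for k
  proof -
    have "y k = p \<or> y k = q" "y (Suc k) = p \<or> y (Suc k) = q" using yv that by auto
    moreover have "y k \<le> y (Suc k)" using ym that by auto
    ultimately show ?thesis using pq unfolding c_def by auto
  qed
  have "psum A n y = (\<Sum>k<n. c * (y (Suc k) - y k))" unfolding psum_def using t by simp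
  also have "\<dots> = c * (y n - y 0)" by (simp add: sum_distrib_left[symmetric] sum_lessThan_telescope)
  also have "\<dots> = \<bar>A q - A p\<bar>" using pq y0 yn unfolding c_def by simp
  finally show ?thesis .
qed

context bvfun begin

lemma var_approx:
  assumes "0 \<le> a" "a \<le> b" "b \<le> 1" "e > 0"
  obtains n x where "is_partition a b n x" "var A a b - e < psum A n x"
proof -
  have "\<not> (\<forall>n x. is_partition a b n x \<longrightarrow> psum A n x \<le> var A a b - e)"
  proof
    assume H: "\<forall>n x. is_partition a b n x \<longrightarrow> psum A n x \<le> var A a b - e"
    have "Sup {psum A n x |n x. is_partition a b n x} \<le> var A a b - e"
      by (rule cSup_least) (use var_ne[of a b] assms H in auto)
    then have "var A a b \<le> var A a b - e" by (simp only: var_def)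
    then show False using assms by simp
  qed
  then show ?thesis using that by force
qed

lemma unif_A:
  assumes "continuous_on {0..1} A" "e > 0"
  obtains d where "d > 0" "\<And>x y. x \<in> {0..1} \<Longrightarrow> y \<in> {0..1} \<Longrightarrow> \<bar>x - y\<bar> < d \<Longrightarrow> \<bar>A x - A y\<bar> < e"
proof -
  have "uniformly_continuous_on {0..1} A"
    using compact_uniformly_continuous[OF assms(1)] by simp
  then obtain d where "d > 0" "\<forall>x\<in>{0..1}. \<forall>x'\<in>{0..1}. dist x' x < d \<longrightarrow> dist (A x') (A x) < e"
    unfolding uniformly_continuous_on_def using assms(2) by metis
  then show ?thesis using that by (auto simp: dist_real_def)
qed

lemma var_right:
  assumes cont: "continuous_on {0..1} A" and t0: "0 \<le> t0" "t0 < 1" and e: "e > 0"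
  shows "\<exists>t1. t0 < t1 \<and> t1 \<le> 1 \<and> var A t0 t1 \<le> e"
proof -
  obtain d where d: "d > 0" "\<And>x y. x \<in> {0..1} \<Longrightarrow> y \<in> {0..1} \<Longrightarrow> \<bar>x - y\<bar> < d \<Longrightarrow> \<bar>A x - A y\<bar> < e/2"
    using unif_A[OF cont, of "e/2"] e by auto
  obtain n x where p: "is_partition t0 1 n x" and px: "var A t0 1 - e/2 < psum A n x"
    using var_approx[of t0 1 "e/2"] t0 e by auto
  define T where "T = {x k | k. k \<le> n \<and> x k > t0}"
  have fT: "finite T" unfolding T_def by simp
  have "1 \<in> T" unfolding T_def using p t0 unfolding is_partition_def by auto
  then have neT: "T \<noteq> {}" by auto
  define m where "m = Min T"
  have m: "m > t0" "m \<le> 1" using Min_in[OF fT neT] Min_le[OF fT \<open>1 \<in> T\<close>] unfolding m_def T_def by auto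
  define t1 where "t1 = min (t0 + d/2) m"
  have t1: "t0 < t1" "t1 \<le> 1" "t1 < t0 + d" using m d unfolding t1_def by auto
  have xr: "t0 \<le> x k" "x k \<le> 1" if "k \<le> n" for k using partition_range[OF p that] by auto
  have yv: "min (x k) t1 = t0 \<or> min (x k) t1 = t1" if "k \<le> n" for k
  proof (cases "x k > t0")
    case True
    then have "x k \<in> T" unfolding T_def using that by auto
    then have "x k \<ge> m" unfolding m_def using fT by auto
    then show ?thesis unfolding t1_def by auto
  next
    case False then show ?thesis using xr[OF that] t1 by auto
  qed
  have ps: "psum A n (\<lambda>k. min (x k) t1) = \<bar>A t1 - A t0\<bar>"
    by (rule two_valued_psum) (use yv t1 p in \<open>auto simp: is_partition_def\<close>)
  have At: "\<bar>A t1 - A t0\<bar> < e/2" using d(2)[of t1 t0] t0 t1 by auto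
  note sp = partition_split[OF p less_imp_le[OF t1(1)] t1(2)]
  have "psum A n (\<lambda>k. max (x k) t1) \<le> var A t1 1" by (rule var_ge[OF _ _ _ sp(2)]) (use t0 t1 in auto)
  moreover have "var A t0 1 = var A t0 t1 + var A t1 1" by (rule var_add) (use t0 t1 in auto)
  ultimately have "var A t0 t1 \<le> e" using sp(3)[of A] ps At px by linarith
  then show ?thesis using t1 by auto
qed

lemma var_left:
  assumes cont: "continuous_on {0..1} A" and t0: "0 < t0" "t0 \<le> 1" and e: "e > 0"
  shows "\<exists>t1. 0 \<le> t1 \<and> t1 < t0 \<and> var A t1 t0 \<le> e"
proof -
  obtain d where d: "d > 0" "\<And>x y. x \<in> {0..1} \<Longrightarrow> y \<in> {0..1} \<Longrightarrow> \<bar>x - y\<bar> < d \<Longrightarrow> \<bar>A x - A y\<bar> < e/2"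
    using unif_A[OF cont, of "e/2"] e by auto
  obtain n x where p: "is_partition 0 t0 n x" and px: "var A 0 t0 - e/2 < psum A n x"
    using var_approx[of 0 t0 "e/2"] t0 e by auto
  define T where "T = {x k | k. k \<le> n \<and> x k < t0}"
  have fT: "finite T" unfolding T_def by simp
  have "0 \<in> T" unfolding T_def using p t0 unfolding is_partition_def by auto
  then have neT: "T \<noteq> {}" by auto
  define m where "m = Max T"
  have m: "m < t0" "0 \<le> m" using Max_in[OF fT neT] Max_ge[OF fT \<open>0 \<in> T\<close>] unfolding m_def T_def by auto
  define t1 where "t1 = max (t0 - d/2) m"
  have t1: "t1 < t0" "0 \<le> t1" "t0 < t1 + d" using m d unfolding t1_def by auto
  have xr: "0 \<le> x k" "x k \<le> t0" if "k \<le> n" for k using partition_range[OF p that] by auto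
  have yv: "max (x k) t1 = t1 \<or> max (x k) t1 = t0" if "k \<le> n" for k
  proof (cases "x k < t0")
    case True
    then have "x k \<in> T" unfolding T_def using that by auto
    then have "x k \<le> m" unfolding m_def using fT by auto
    then show ?thesis unfolding t1_def by auto
  next
    case False then show ?thesis using xr[OF that] t1 by auto
  qed
  have ps: "psum A n (\<lambda>k. max (x k) t1) = \<bar>A t0 - A t1\<bar>"
    by (rule two_valued_psum) (use yv t1 p in \<open>auto simp: is_partition_def\<close>)
  have At: "\<bar>A t0 - A t1\<bar> < e/2" using d(2)[of t0 t1] t0 t1 by auto
  note sp = partition_split[OF p t1(2) less_imp_le[OF t1(1)]]
  have "psum A n (\<lambda>k. min (x k) t1) \<le> var A 0 t1" by (rule var_ge[OF _ _ _ sp(1)]) (use t0 t1 in auto)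
  moreover have "var A 0 t0 = var A 0 t1 + var A t1 t0" by (rule var_add) (use t0 t1 in auto)
  ultimately have "var A t1 t0 \<le> e" using sp(3)[of A] ps At px by linarith
  then show ?thesis using t1 by auto
qed

lemma var_cont:
  assumes cont: "continuous_on {0..1} A"
  shows "continuous_on {0..1} (\<lambda>t. var A 0 t)"
  unfolding continuous_on_iff
proof (intro ballI allI impI)
  fix t0 e :: real assume t0: "t0 \<in> {0..1}" and e: "0 < e"
  obtain d1 where d1: "d1 > 0" "\<And>t. t \<in> {0..1} \<Longrightarrow> t0 \<le> t \<Longrightarrow> t < t0 + d1 \<Longrightarrow> var A t0 t < e"
  proof (cases "t0 < 1")
    case True
    then obtain t1 where t1: "t0 < t1" "t1 \<le> 1" "var A t0 t1 \<le> e/2" using var_right[OF cont, of t0 "e/2"] t0 e by auto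
    show ?thesis
    proof (rule that[of "t1 - t0"])
      fix t assume t: "t \<in> {0..1}" "t0 \<le> t" "t < t0 + (t1 - t0)"
      have "var A t0 t1 = var A t0 t + var A t t1" by (rule var_add) (use t t0 t1 in auto)
      moreover have "var A t t1 \<ge> 0" by (rule var_nonneg) (use t t0 t1 in auto)
      ultimately show "var A t0 t < e" using t1 e by linarith
    qed (use t1 in auto)
  next
    case False
    then have "t0 = 1" using t0 by auto
    show ?thesis
    proof (rule that[of 1])
      fix t assume t: "t \<in> {0..1}" "t0 \<le> t" "t < t0 + 1"
      then have "t = t0" using \<open>t0 = 1\<close> by auto
      then show "var A t0 t < e" using var_refl[of t0] t0 e by auto
    qed auto
  qed
  obtain d2 where d2: "d2 > 0" "\<And>t. t \<in> {0..1} \<Longrightarrow> t \<le> t0 \<Longrightarrow> t0 - d2 < t \<Longrightarrow> var A t t0 < e"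
  proof (cases "0 < t0")
    case True
    then obtain t1 where t1: "0 \<le> t1" "t1 < t0" "var A t1 t0 \<le> e/2" using var_left[OF cont, of t0 "e/2"] t0 e by auto
    show ?thesis
    proof (rule that[of "t0 - t1"])
      fix t assume t: "t \<in> {0..1}" "t \<le> t0" "t0 - (t0 - t1) < t"
      have "var A t1 t0 = var A t1 t + var A t t0" by (rule var_add) (use t t0 t1 in auto)
      moreover have "var A t1 t \<ge> 0" by (rule var_nonneg) (use t t0 t1 in auto)
      ultimately show "var A t t0 < e" using t1 e by linarith
    qed (use t1 in auto)
  next
    case False
    then have "t0 = 0" using t0 by auto
    show ?thesis
    proof (rule that[of 1])
      fix t assume t: "t \<in> {0..1}" "t \<le> t0" "t0 - 1 < t"
      then have "t = t0" using \<open>t0 = 0\<close> by auto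
      then show "var A t t0 < e" using var_refl[of t0] t0 e by auto
    qed auto
  qed
  show "\<exists>d>0. \<forall>t\<in>{0..1}. dist t t0 < d \<longrightarrow> dist (var A 0 t) (var A 0 t0) < e"
  proof (intro exI[of _ "min d1 d2"] conjI ballI impI)
    show "0 < min d1 d2" using d1 d2 by simp
    fix t assume t: "t \<in> {0..1}" "dist t t0 < min d1 d2"
    show "dist (var A 0 t) (var A 0 t0) < e"
    proof (cases "t0 \<le> t")
      case True
      have "var A 0 t = var A 0 t0 + var A t0 t" by (rule var_add) (use t t0 True in auto)
      moreover have "var A t0 t \<ge> 0" by (rule var_nonneg) (use t t0 True in auto)
      ultimately show ?thesis using d1(2)[of t] t True by (auto simp: dist_real_def)
    next
      case False
      have "var A 0 t0 = var A 0 t + var A t t0" by (rule var_add) (use t t0 False in auto)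
      moreover have "var A t t0 \<ge> 0" by (rule var_nonneg) (use t t0 False in auto)
      ultimately show ?thesis using d2(2)[of t] t False by (auto simp: dist_real_def)
    qed
  qed
qed

end

definition ginv :: "(real\<Rightarrow>real) \<Rightarrow> real \<Rightarrow> real" where
  "ginv M u = max 0 (min 1 (Sup {r\<in>{0..1}. M r \<le> u}))"

definition SI :: "(real\<Rightarrow>real) \<Rightarrow> (real\<Rightarrow>real) \<Rightarrow> real \<Rightarrow> real" where
  "SI M \<phi> t = integral {M 0..M t} (\<lambda>u. \<phi> (ginv M u))"

lemma ginv_in: "ginv M u \<in> {0..1}"
  unfolding ginv_def by auto

lemma ginv_between:
  assumes M: "mono_on {0..1} M" and st: "0 \<le> s" "s \<le> t" "t \<le> 1" and u: "M s \<le> u" "u < M t"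
  shows "s \<le> ginv M u" "ginv M u \<le> t"
proof -
  let ?S = "{r\<in>{0..1}. M r \<le> u}"
  have sS: "s \<in> ?S" using st u by auto
  have bdd: "bdd_above ?S" by (rule bdd_aboveI[of _ 1]) auto
  have "s \<le> Sup ?S" using sS bdd by (rule cSup_upper)
  moreover have "Sup ?S \<le> t"
  proof (rule cSup_least)
    show "?S \<noteq> {}" using sS by auto
    fix r assume r: "r \<in> ?S"
    show "r \<le> t"
    proof (rule ccontr)
      assume "\<not> r \<le> t"
      then have "M t \<le> M r" using M r st by (intro mono_onD[OF M]) auto
      then show False using r u by auto
    qed
  qed
  ultimately show "s \<le> ginv M u" "ginv M u \<le> t" unfolding ginv_def using st by auto
qed

lemma ginv_mono:
  assumes M: "mono_on {0..1} M"
  shows "mono_on {M 0..} (ginv M)"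
proof (rule mono_onI)
  fix u v assume uv: "u \<in> {M 0..}" "v \<in> {M 0..}" "u \<le> v"
  have "0 \<in> {r\<in>{0..1}. M r \<le> u}" using uv by auto
  then have ne: "{r\<in>{0..1}. M r \<le> u} \<noteq> {}" by blast
  have bdd: "bdd_above {r\<in>{0..1}. M r \<le> v}" by (rule bdd_aboveI[of _ 1]) auto
  have sub: "{r\<in>{0..1}. M r \<le> u} \<subseteq> {r\<in>{0..1}. M r \<le> v}" using uv by auto
  have "Sup {r\<in>{0..1}. M r \<le> u} \<le> Sup {r\<in>{0..1}. M r \<le> v}"
    using cSup_subset_mono[OF ne bdd sub] .
  then show "ginv M u \<le> ginv M v" unfolding ginv_def by auto
qed

lemma ginv_inverse:
  assumes M: "mono_on {0..1} M" and Mc: "continuous_on {0..1} M" and u: "M 0 \<le> u" "u \<le> M 1"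
  shows "M (ginv M u) = u"
proof -
  let ?S = "{r\<in>{0..1}. M r \<le> u}"
  have "0 \<in> ?S" using u by auto
  then have ne: "?S \<noteq> {}" by blast
  have bdd: "bdd_above ?S" by (rule bdd_aboveI[of _ 1]) auto
  have cl: "closed ?S"
  proof -
    have "?S = {0..1} \<inter> M -` {..u}" by auto
    then show ?thesis using continuous_closed_preimage[OF Mc] by auto
  qed
  define \<sigma> where "\<sigma> = Sup ?S"
  have sS: "\<sigma> \<in> ?S" unfolding \<sigma>_def using closed_contains_Sup[OF ne bdd cl] .
  then have g: "ginv M u = \<sigma>" unfolding ginv_def \<sigma>_def by auto
  have le: "M \<sigma> \<le> u" using sS by auto
  have "u \<le> M \<sigma>"
  proof (rule ccontr)
    assume "\<not> u \<le> M \<sigma>"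
    then have lt: "M \<sigma> < u" by simp
    have "\<sigma> < 1"
    proof (rule ccontr)
      assume "\<not> \<sigma> < 1" then have "\<sigma> = 1" using sS by auto
      then show False using lt u by auto
    qed
    obtain d where d: "d > 0" "\<forall>r\<in>{0..1}. dist r \<sigma> < d \<longrightarrow> dist (M r) (M \<sigma>) < u - M \<sigma>"
      using Mc sS lt unfolding continuous_on_iff by (metis diff_gt_0_iff_gt mem_Collect_eq)
    define r where "r = min 1 (\<sigma> + d/2)"
    have r: "r \<in> {0..1}" "\<sigma> < r" "dist r \<sigma> < d" using \<open>\<sigma> < 1\<close> sS d unfolding r_def by (auto simp: dist_real_def)
    then have "M r < u" using d(2)[rule_format, of r] by (auto simp: dist_real_def)
    then have "r \<in> ?S" using r by auto
    then have "r \<le> \<sigma>" unfolding \<sigma>_def using bdd by (rule cSup_upper)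
    then show False using r by simp
  qed
  then show ?thesis using g le by simp
qed

lemma cont_bound:
  fixes \<phi> :: "real \<Rightarrow> real"
  assumes "continuous_on {0..1::real} \<phi>"
  obtains K where "K \<ge> 0" "\<And>s. s \<in> {0..1} \<Longrightarrow> \<bar>\<phi> s\<bar> \<le> K"
proof -
  have "compact (\<phi> ` {0..1})" using compact_continuous_image[OF assms] by simp
  then obtain K where "K > 0" "\<forall>x\<in>\<phi> ` {0..1}. norm x \<le> K"
    using compact_imp_bounded bounded_pos by metis
  then show ?thesis using that[of K] by auto
qed

lemma SI_integrable:
  fixes \<phi> :: "real \<Rightarrow> real"
  assumes M: "mono_on {0..1} M" and \<phi>: "continuous_on {0..1} \<phi>" and ab: "M 0 \<le> a"
  shows "(\<lambda>u. \<phi> (ginv M u)) integrable_on {a..b}"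
proof -
  define cl :: "real \<Rightarrow> real" where "cl x = max 0 (min 1 x)" for x
  define h where "h = (\<lambda>x. \<phi> (cl x))"
  have clc: "continuous_on UNIV cl" unfolding cl_def by (intro continuous_intros)
  have clr: "cl x \<in> {0..1}" for x unfolding cl_def by auto
  have hc: "continuous_on UNIV h" unfolding h_def
    by (rule continuous_on_compose2[OF \<phi> clc]) (use clr in auto)
  have hm: "h \<in> borel_measurable borel" using borel_measurable_continuous_onI[OF hc] .
  have gm: "mono_on {a..b} (ginv M)" using mono_on_subset[OF ginv_mono[OF M]] ab by auto
  have gmeas: "ginv M \<in> borel_measurable (lebesgue_on {a..b})"
  proof -
    have 1: "ginv M \<in> borel_measurable (restrict_space borel {a..b})" using borel_measurable_mono_on_fnc[OF gm] .
    have "sets (restrict_space borel {a..b}) \<subseteq> sets (restrict_space lebesgue {a..b})"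
      by (rule mono_restrict_space) auto
    then show ?thesis using borel_measurable_subalgebra[OF _ _ 1] by auto
  qed
  have m: "(\<lambda>u. h (ginv M u)) \<in> borel_measurable (lebesgue_on {a..b})"
    using measurable_compose[OF gmeas hm] by (simp add: o_def)
  obtain K where K: "K \<ge> 0" "\<And>s. s \<in> {0..1} \<Longrightarrow> \<bar>\<phi> s\<bar> \<le> K" using cont_bound[OF \<phi>] by blast
  have eq: "h (ginv M u) = \<phi> (ginv M u)" for u
    unfolding h_def cl_def using ginv_in[of M u] by auto
  have "(\<lambda>u. h (ginv M u)) integrable_on {a..b}"
    by (rule measurable_bounded_by_integrable_imp_integrable_real[OF m integrable_const_ivl[of K]])
       (use K ginv_in eq in auto)
  then show ?thesis using eq by simp
qed

lemma integral_spike_bound: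
  fixes h :: "real \<Rightarrow> real" and a b c e :: real
  assumes h: "h integrable_on {a..b}" and ab: "a \<le> b" and e: "e \<ge> 0"
    and b: "\<And>u. a \<le> u \<Longrightarrow> u < b \<Longrightarrow> \<bar>h u - c\<bar> \<le> e"
  shows "\<bar>integral {a..b} h - c * (b - a)\<bar> \<le> e * (b - a)"
proof -
  have "((\<lambda>u. h u - c) has_integral (integral {a..b} h - Henstock_Kurzweil_Integration.content {a..b} *\<^sub>R c)) {a..b}"
    by (intro has_integral_diff integrable_integral h has_integral_const_real)
  then have "norm (integral {a..b} h - Henstock_Kurzweil_Integration.content {a..b} *\<^sub>R c) \<le> e * Henstock_Kurzweil_Integration.content {a..b}"
    by (rule has_integral_bound_real[OF e finite.insertI[OF finite.emptyI, of b]]) (use b in auto)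
  then show ?thesis using ab by (simp add: content_real algebra_simps)
qed

lemma integral_chain:
  fixes h :: "real \<Rightarrow> real" and y :: "nat \<Rightarrow> real"
  assumes h: "h integrable_on {y 0..y n}" and y: "\<And>k. k < n \<Longrightarrow> y k \<le> y (Suc k)"
  shows "integral {y 0..y n} h = (\<Sum>k<n. integral {y k..y (Suc k)} h)"
  using h y
proof (induction n)
  case 0 then show ?case by (simp add: integral_refl)
next
  case (Suc n)
  have ch: "y 0 \<le> y n"
  proof -
    have "\<forall>j\<le>n. y 0 \<le> y j"
    proof (intro allI impI)
      fix j assume "j \<le> n" then show "y 0 \<le> y j"
        using Suc.prems(2) by (induction j) (auto intro: order_trans)
    qed
    then show ?thesis by simp
  qed
  have yn: "y n \<le> y (Suc n)" using Suc.prems(2) by simp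
  have i1: "h integrable_on {y 0..y n}"
    by (rule integrable_on_subinterval[OF Suc.prems(1)]) (use yn in auto)
  have "integral {y 0..y (Suc n)} h = integral {y 0..y n} h + integral {y n..y (Suc n)} h"
    using Henstock_Kurzweil_Integration.integral_combine[OF ch yn Suc.prems(1)] by simp
  also have "integral {y 0..y n} h = (\<Sum>k<n. integral {y k..y (Suc k)} h)"
    using Suc.IH[OF i1] Suc.prems(2) by simp
  finally show ?case by simp
qed

lemma SI_RS:
  assumes M: "mono_on {0..1} M" and \<phi>: "continuous_on {0..1} \<phi>" and t: "0 \<le> t" "t \<le> 1"
  shows "has_RS_integral \<phi> M 0 t (SI M \<phi> t)"
  unfolding has_RS_integral_def
proof (intro allI impI)
  fix \<epsilon> :: real assume \<epsilon>: "\<epsilon> > 0"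
  have M01: "M 0 \<le> M 1" using mono_onD[OF M] by auto
  define e where "e = \<epsilon> / (2 * (M 1 - M 0 + 1))"
  have e: "e > 0" unfolding e_def using \<epsilon> M01 by auto
  have "uniformly_continuous_on {0..1} \<phi>" using compact_uniformly_continuous[OF \<phi>] by simp
  then obtain d where d: "d > 0" "\<forall>x\<in>{0..1}. \<forall>x'\<in>{0..1}. dist x' x < d \<longrightarrow> dist (\<phi> x') (\<phi> x) < e"
    unfolding uniformly_continuous_on_def using e by metis
  show "\<exists>\<delta>>0. \<forall>n x \<xi>. is_partition 0 t n x \<and> (\<forall>k<n. x (Suc k) - x k < \<delta>) \<and>
          (\<forall>k<n. x k \<le> \<xi> k \<and> \<xi> k \<le> x (Suc k)) \<longrightarrow>
          \<bar>(\<Sum>k<n. \<phi> (\<xi> k) * (M (x (Suc k)) - M (x k))) - SI M \<phi> t\<bar> < \<epsilon>"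
  proof (intro exI[of _ d] conjI allI impI)
    show "d > 0" by fact
    fix n x \<xi> assume H: "is_partition 0 t n x \<and> (\<forall>k<n. x (Suc k) - x k < d) \<and>
          (\<forall>k<n. x k \<le> \<xi> k \<and> \<xi> k \<le> x (Suc k))"
    then have p: "is_partition 0 t n x" and mesh: "\<And>k. k < n \<Longrightarrow> x (Suc k) - x k < d"
      and tag: "\<And>k. k < n \<Longrightarrow> x k \<le> \<xi> k \<and> \<xi> k \<le> x (Suc k)" by auto
    have xr: "0 \<le> x k" "x k \<le> 1" if "k \<le> n" for k using partition_range[OF p that] t by auto
    have xm: "x k \<le> x (Suc k)" if "k < n" for k using p that unfolding is_partition_def by auto
    have Mm: "M (x k) \<le> M (x (Suc k))" if "k < n" for k
      using mono_onD[OF M] xr[of k] xr[of "Suc k"] xm[OF that] that by auto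
    have int: "(\<lambda>u. \<phi> (ginv M u)) integrable_on {M (x 0)..M (x n)}"
      by (rule SI_integrable[OF M \<phi>]) (use p in \<open>auto simp: is_partition_def\<close>)
    have SIs: "SI M \<phi> t = (\<Sum>k<n. integral {M (x k)..M (x (Suc k))} (\<lambda>u. \<phi> (ginv M u)))"
      unfolding SI_def using integral_chain[of "\<lambda>u. \<phi> (ginv M u)" "\<lambda>k. M (x k)" n] int Mm p
      by (auto simp: is_partition_def)
    have b: "\<bar>\<phi> (\<xi> k) * (M (x (Suc k)) - M (x k)) - integral {M (x k)..M (x (Suc k))} (\<lambda>u. \<phi> (ginv M u))\<bar>
             \<le> e * (M (x (Suc k)) - M (x k))" if k: "k < n" for k
    proof -
      have "\<bar>integral {M (x k)..M (x (Suc k))} (\<lambda>u. \<phi> (ginv M u)) - \<phi> (\<xi> k) * (M (x (Suc k)) - M (x k))\<bar>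
             \<le> e * (M (x (Suc k)) - M (x k))"
      proof (rule integral_spike_bound)
        show "(\<lambda>u. \<phi> (ginv M u)) integrable_on {M (x k)..M (x (Suc k))}"
          by (rule SI_integrable[OF M \<phi>]) (use mono_onD[OF M] xr[of k] k in auto)
        show "M (x k) \<le> M (x (Suc k))" using Mm[OF k] .
        show "0 \<le> e" using e by simp
        fix u assume u: "M (x k) \<le> u" "u < M (x (Suc k))"
        have g: "x k \<le> ginv M u" "ginv M u \<le> x (Suc k)"
          using ginv_between[OF M _ xm[OF k] _ u] xr[of k] xr[of "Suc k"] k by auto
        have "dist (\<phi> (ginv M u)) (\<phi> (\<xi> k)) < e"
          using d(2) ginv_in[of M u] tag[OF k] xr[of k] xr[of "Suc k"] k g mesh[OF k]
          by (auto simp: dist_real_def)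
        then show "\<bar>\<phi> (ginv M u) - \<phi> (\<xi> k)\<bar> \<le> e" by (simp add: dist_real_def)
      qed
      then show ?thesis by (simp add: abs_minus_commute)
    qed
    have "\<bar>(\<Sum>k<n. \<phi> (\<xi> k) * (M (x (Suc k)) - M (x k))) - SI M \<phi> t\<bar>
        = \<bar>\<Sum>k<n. \<phi> (\<xi> k) * (M (x (Suc k)) - M (x k)) - integral {M (x k)..M (x (Suc k))} (\<lambda>u. \<phi> (ginv M u))\<bar>"
      unfolding SIs sum_subtractf by simp
    also have "\<dots> \<le> (\<Sum>k<n. \<bar>\<phi> (\<xi> k) * (M (x (Suc k)) - M (x k)) - integral {M (x k)..M (x (Suc k))} (\<lambda>u. \<phi> (ginv M u))\<bar>)"
      by (rule sum_abs)
    also have "\<dots> \<le> (\<Sum>k<n. e * (M (x (Suc k)) - M (x k)))"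
      by (rule sum_mono) (use b in auto)
    also have "\<dots> = e * (M t - M 0)"
      using p sum_lessThan_telescope[of "\<lambda>k. M (x k)" n] by (simp add: sum_distrib_left[symmetric] is_partition_def)
    also have "\<dots> \<le> e * (M 1 - M 0)"
      using mono_onD[OF M, of t 1] t e by auto
    also have "\<dots> < \<epsilon>"
    proof -
      have pos: "0 < 2 * (M 1 - M 0 + 1)" using M01 by simp
      have "\<epsilon> * (M 1 - M 0) < \<epsilon> * (2 * (M 1 - M 0 + 1))"
        by (rule mult_strict_left_mono[OF _ \<epsilon>]) (use M01 in simp)
      then have q: "\<epsilon> * (M 1 - M 0) / (2 * (M 1 - M 0 + 1)) < \<epsilon>"
        using pos_divide_less_eq[OF pos] by blast
      have "e * (M 1 - M 0) = \<epsilon> * (M 1 - M 0) / (2 * (M 1 - M 0 + 1))" by (simp add: e_def)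
      then show ?thesis using q by simp
    qed
    finally show "\<bar>(\<Sum>k<n. \<phi> (\<xi> k) * (M (x (Suc k)) - M (x k))) - SI M \<phi> t\<bar> < \<epsilon>" .
  qed
qed

lemma fine_partition:
  assumes ab: "a \<le> b" and d: "\<delta> > 0"
  shows "\<exists>n x. is_partition a b n x \<and> (\<forall>k<n. x (Suc k) - x k < \<delta>)"
proof -
  define n :: nat where "n = nat \<lceil>(b - a) / \<delta>\<rceil> + 1"
  have npos: "real n > 0" unfolding n_def by simp
  have nb: "real n > (b - a) / \<delta>" unfolding n_def by linarith
  then have "b - a < \<delta> * real n" using d by (simp add: field_simps)
  then have mesh: "(b - a) / real n < \<delta>" using npos by (simp add: field_simps)
  define x where "x k = a + real k * (b - a) / real n" for k
  have "is_partition a b n x"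
    unfolding is_partition_def x_def using npos ab
    by (auto simp: field_simps intro!: mult_right_mono)
  moreover have "x (Suc k) - x k < \<delta>" for k
  proof -
    have "x (Suc k) - x k = (real (Suc k) * (b - a) - real k * (b - a)) / real n"
      unfolding x_def by (simp add: diff_divide_distrib)
    also have "\<dots> = (b - a) / real n" by (simp add: algebra_simps)
    finally show ?thesis using mesh by simp
  qed
  ultimately show ?thesis by blast
qed

lemma RS_unique:
  assumes ab: "a \<le> b" and I: "has_RS_integral f A a b I" and J: "has_RS_integral f A a b J"
  shows "I = J"
proof (rule ccontr)
  assume ne: "I \<noteq> J"
  define e where "e = \<bar>I - J\<bar> / 2"
  have e: "e > 0" using ne unfolding e_def by simp
  obtain d1 where d1: "d1 > 0" "\<forall>n x \<xi>. is_partition a b n x \<and> (\<forall>k<n. x (Suc k) - x k < d1)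
        \<and> (\<forall>k<n. x k \<le> \<xi> k \<and> \<xi> k \<le> x (Suc k))
        \<longrightarrow> \<bar>(\<Sum>k<n. f (\<xi> k) * (A (x (Suc k)) - A (x k))) - I\<bar> < e"
    using I[unfolded has_RS_integral_def, rule_format, OF e] by blast
  obtain d2 where d2: "d2 > 0" "\<forall>n x \<xi>. is_partition a b n x \<and> (\<forall>k<n. x (Suc k) - x k < d2)
        \<and> (\<forall>k<n. x k \<le> \<xi> k \<and> \<xi> k \<le> x (Suc k))
        \<longrightarrow> \<bar>(\<Sum>k<n. f (\<xi> k) * (A (x (Suc k)) - A (x k))) - J\<bar> < e"
    using J[unfolded has_RS_integral_def, rule_format, OF e] by blast
  obtain n x where p: "is_partition a b n x" "\<forall>k<n. x (Suc k) - x k < min d1 d2"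
    using fine_partition[OF ab, of "min d1 d2"] d1 d2 by auto
  have xm: "\<forall>k<n. x k \<le> x k \<and> x k \<le> x (Suc k)" using p unfolding is_partition_def by auto
  have "\<bar>(\<Sum>k<n. f (x k) * (A (x (Suc k)) - A (x k))) - I\<bar> < e" using d1(2)[rule_format, of n x x] p xm by auto
  moreover have "\<bar>(\<Sum>k<n. f (x k) * (A (x (Suc k)) - A (x k))) - J\<bar> < e" using d2(2)[rule_format, of n x x] p xm by auto
  ultimately have "\<bar>I - J\<bar> < 2 * e" by (simp add: abs_less_iff)
  then show False unfolding e_def by simp
qed

lemma RS_integral_eq:
  assumes "a \<le> b" "has_RS_integral f A a b I"
  shows "RS_integral f A a b = I" "RS_integrable f A a b"
proof -
  show "RS_integral f A a b = I" unfolding RS_integral_def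
  proof (rule the_equality)
    show "has_RS_integral f A a b I" by (rule assms(2))
    fix J assume "has_RS_integral f A a b J"
    then show "J = I" using RS_unique[OF assms(1) _ assms(2)] by blast
  qed
  show "RS_integrable f A a b" unfolding RS_integrable_def using assms(2) by blast
qed

lemma abs_add_half: "\<bar>X - I\<bar> < e/2 \<Longrightarrow> \<bar>Y - J\<bar> < e/2 \<Longrightarrow> \<bar>(X + Y) - (I + J)\<bar> < (e::real)"
  by arith

lemma RS_add:
  assumes I: "has_RS_integral f A a b I" and J: "has_RS_integral f B a b J"
  shows "has_RS_integral f (\<lambda>s. A s + B s) a b (I + J)"
  unfolding has_RS_integral_def
proof (intro allI impI)
  fix e :: real assume e: "e > 0"
  obtain d1 where d1: "d1 > 0" "\<forall>n x \<xi>. is_partition a b n x \<and> (\<forall>k<n. x (Suc k) - x k < d1)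
        \<and> (\<forall>k<n. x k \<le> \<xi> k \<and> \<xi> k \<le> x (Suc k))
        \<longrightarrow> \<bar>(\<Sum>k<n. f (\<xi> k) * (A (x (Suc k)) - A (x k))) - I\<bar> < e/2"
    using I[unfolded has_RS_integral_def, rule_format, of "e/2"] e by auto
  obtain d2 where d2: "d2 > 0" "\<forall>n x \<xi>. is_partition a b n x \<and> (\<forall>k<n. x (Suc k) - x k < d2)
        \<and> (\<forall>k<n. x k \<le> \<xi> k \<and> \<xi> k \<le> x (Suc k))
        \<longrightarrow> \<bar>(\<Sum>k<n. f (\<xi> k) * (B (x (Suc k)) - B (x k))) - J\<bar> < e/2"
    using J[unfolded has_RS_integral_def, rule_format, of "e/2"] e by auto
  show "\<exists>\<delta>>0. \<forall>n x \<xi>. is_partition a b n x \<and> (\<forall>k<n. x (Suc k) - x k < \<delta>) \<and>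
             (\<forall>k<n. x k \<le> \<xi> k \<and> \<xi> k \<le> x (Suc k)) \<longrightarrow>
             \<bar>(\<Sum>k<n. f (\<xi> k) * (A (x (Suc k)) + B (x (Suc k)) - (A (x k) + B (x k)))) - (I + J)\<bar> < e"
  proof (intro exI[of _ "min d1 d2"] conjI allI impI)
    show "min d1 d2 > 0" using d1 d2 by simp
    fix n x \<xi> assume H: "is_partition a b n x \<and> (\<forall>k<n. x (Suc k) - x k < min d1 d2) \<and>
             (\<forall>k<n. x k \<le> \<xi> k \<and> \<xi> k \<le> x (Suc k))"
    have eq: "(\<Sum>k<n. f (\<xi> k) * (A (x (Suc k)) + B (x (Suc k)) - (A (x k) + B (x k))))
        = (\<Sum>k<n. f (\<xi> k) * (A (x (Suc k)) - A (x k))) + (\<Sum>k<n. f (\<xi> k) * (B (x (Suc k)) - B (x k)))"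
      by (simp add: sum.distrib[symmetric] algebra_simps)
    have a1: "\<bar>(\<Sum>k<n. f (\<xi> k) * (A (x (Suc k)) - A (x k))) - I\<bar> < e/2"
      using d1(2)[rule_format, of n x \<xi>] H by auto
    have a2: "\<bar>(\<Sum>k<n. f (\<xi> k) * (B (x (Suc k)) - B (x k))) - J\<bar> < e/2"
      using d2(2)[rule_format, of n x \<xi>] H by auto
    show "\<bar>(\<Sum>k<n. f (\<xi> k) * (A (x (Suc k)) + B (x (Suc k)) - (A (x k) + B (x k)))) - (I + J)\<bar> < e"
      unfolding eq by (rule abs_add_half[OF a1 a2])
  qed
qed

lemma RS_neg:
  assumes I: "has_RS_integral f A a b I"
  shows "has_RS_integral f (\<lambda>s. - A s) a b (- I)"
  using I unfolding has_RS_integral_def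
proof (intro allI impI)
  fix e :: real assume e: "e > 0" and H: "\<forall>\<epsilon>>0. \<exists>\<delta>>0. \<forall>n x \<xi>. is_partition a b n x \<and> (\<forall>k<n. x (Suc k) - x k < \<delta>) \<and>
      (\<forall>k<n. x k \<le> \<xi> k \<and> \<xi> k \<le> x (Suc k)) \<longrightarrow> \<bar>(\<Sum>k<n. f (\<xi> k) * (A (x (Suc k)) - A (x k))) - I\<bar> < \<epsilon>"
  then obtain d where d: "d > 0" "\<forall>n x \<xi>. is_partition a b n x \<and> (\<forall>k<n. x (Suc k) - x k < d) \<and>
      (\<forall>k<n. x k \<le> \<xi> k \<and> \<xi> k \<le> x (Suc k)) \<longrightarrow> \<bar>(\<Sum>k<n. f (\<xi> k) * (A (x (Suc k)) - A (x k))) - I\<bar> < e"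
    by blast
  have eq: "(\<Sum>k<n. f (\<xi> k) * (- A (x (Suc k)) - - A (x k))) - - I = - ((\<Sum>k<n. f (\<xi> k) * (A (x (Suc k)) - A (x k))) - I)" for n x \<xi>
  proof -
    have "(\<Sum>k<n. f (\<xi> k) * (- A (x (Suc k)) - - A (x k))) = (\<Sum>k<n. - (f (\<xi> k) * (A (x (Suc k)) - A (x k))))"
      by (rule sum.cong) (auto simp: algebra_simps)
    also have "\<dots> = - (\<Sum>k<n. f (\<xi> k) * (A (x (Suc k)) - A (x k)))" by (rule sum_negf)
    finally show ?thesis by simp
  qed
  show "\<exists>\<delta>>0. \<forall>n x \<xi>. is_partition a b n x \<and> (\<forall>k<n. x (Suc k) - x k < \<delta>) \<and>
      (\<forall>k<n. x k \<le> \<xi> k \<and> \<xi> k \<le> x (Suc k)) \<longrightarrow> \<bar>(\<Sum>k<n. f (\<xi> k) * (- A (x (Suc k)) - - A (x k))) - - I\<bar> < e"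
    using d unfolding eq abs_minus_cancel by blast
qed

lemma RS_diff:
  assumes I: "has_RS_integral f A a b I" and J: "has_RS_integral f B a b J"
  shows "has_RS_integral f (\<lambda>s. A s - B s) a b (I - J)"
  using RS_add[OF I RS_neg[OF J]] by simp

lemma RS_zero: "has_RS_integral f (\<lambda>s. 0) a b 0"
  unfolding has_RS_integral_def by (auto intro: exI[of _ 1])

lemma RS_sum:
  assumes "finite J" "\<And>j. j \<in> J \<Longrightarrow> has_RS_integral f (A j) a b (I j)"
  shows "has_RS_integral f (\<lambda>s. \<Sum>j\<in>J. A j s) a b (\<Sum>j\<in>J. I j)"
  using assms
proof (induction J rule: finite_induct)
  case empty then show ?case using RS_zero by simp
next
  case (insert j J)
  then show ?case using RS_add[of f "A j" a b "I j" "\<lambda>s. \<Sum>j\<in>J. A j s" "sum I J"] by auto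
qed

lemma SI_int:
  fixes \<phi> :: "real \<Rightarrow> real"
  assumes M: "mono_on {0..1} M" and \<phi>: "continuous_on {0..1} \<phi>"
  shows "(\<lambda>u. \<phi> (ginv M u)) integrable_on {M 0..b}"
  by (rule SI_integrable[OF M \<phi>]) simp

lemma SI_add:
  fixes \<phi> \<psi> :: "real \<Rightarrow> real"
  assumes M: "mono_on {0..1} M" and \<phi>: "continuous_on {0..1} \<phi>" and \<psi>: "continuous_on {0..1} \<psi>"
  shows "SI M (\<lambda>s. \<phi> s + \<psi> s) t = SI M \<phi> t + SI M \<psi> t"
  unfolding SI_def by (rule Henstock_Kurzweil_Integration.integral_add[OF SI_int[OF M \<phi>] SI_int[OF M \<psi>]])

lemma SI_diff:
  fixes \<phi> \<psi> :: "real \<Rightarrow> real"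
  assumes M: "mono_on {0..1} M" and \<phi>: "continuous_on {0..1} \<phi>" and \<psi>: "continuous_on {0..1} \<psi>"
  shows "SI M (\<lambda>s. \<phi> s - \<psi> s) t = SI M \<phi> t - SI M \<psi> t"
  unfolding SI_def by (rule Henstock_Kurzweil_Integration.integral_diff[OF SI_int[OF M \<phi>] SI_int[OF M \<psi>]])

lemma SI_cmul: "SI M (\<lambda>s. c * \<phi> s) t = c * SI M \<phi> t"
  unfolding SI_def by (rule integral_mult_right)

lemma SI_neg: "SI M (\<lambda>s. - \<phi> s) t = - SI M \<phi> t"
  using SI_cmul[of M "-1" \<phi> t] by simp

lemma SI_const:
  assumes M: "mono_on {0..1} M" and t: "0 \<le> t" "t \<le> 1"
  shows "SI M (\<lambda>s. c) t = c * (M t - M 0)"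
proof -
  have "M 0 \<le> M t" using mono_onD[OF M] t by auto
  then show ?thesis unfolding SI_def by (simp add: content_real)
qed

lemma SI_zero: "SI M \<phi> 0 = 0"
  unfolding SI_def by (simp add: integral_refl)

lemma SI_mono:
  fixes \<phi> \<psi> :: "real \<Rightarrow> real"
  assumes M: "mono_on {0..1} M" and \<phi>: "continuous_on {0..1} \<phi>" and \<psi>: "continuous_on {0..1} \<psi>"
    and le: "\<And>s. s \<in> {0..1} \<Longrightarrow> \<phi> s \<le> \<psi> s"
  shows "SI M \<phi> t \<le> SI M \<psi> t"
  unfolding SI_def by (rule integral_le[OF SI_int[OF M \<phi>] SI_int[OF M \<psi>]]) (use le ginv_in in auto)

lemma SI_abs:
  fixes \<phi> :: "real \<Rightarrow> real"
  assumes M: "mono_on {0..1} M" and \<phi>: "continuous_on {0..1} \<phi>"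
  shows "\<bar>SI M \<phi> t\<bar> \<le> SI M (\<lambda>s. \<bar>\<phi> s\<bar>) t"
proof -
  have a: "continuous_on {0..1} (\<lambda>s. \<bar>\<phi> s\<bar>)" by (intro continuous_intros \<phi>)
  have n: "continuous_on {0..1} (\<lambda>s. - \<phi> s)" by (intro continuous_intros \<phi>)
  have "SI M \<phi> t \<le> SI M (\<lambda>s. \<bar>\<phi> s\<bar>) t" by (rule SI_mono[OF M \<phi> a]) auto
  moreover have "SI M (\<lambda>s. - \<phi> s) t \<le> SI M (\<lambda>s. \<bar>\<phi> s\<bar>) t" by (rule SI_mono[OF M n a]) auto
  ultimately show ?thesis using SI_neg[of M \<phi> t] by linarith
qed

lemma SI_lip:
  fixes \<phi> :: "real \<Rightarrow> real"
  assumes M: "mono_on {0..1} M" and \<phi>: "continuous_on {0..1} \<phi>"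
    and K: "\<And>s. s \<in> {0..1} \<Longrightarrow> \<bar>\<phi> s\<bar> \<le> K" and st: "0 \<le> s" "s \<le> t" "t \<le> 1"
  shows "\<bar>SI M \<phi> t - SI M \<phi> s\<bar> \<le> K * (M t - M s)"
proof -
  have m: "M 0 \<le> M s" "M s \<le> M t" using mono_onD[OF M] st by auto
  have K0: "K \<ge> 0" using K[of 0] by auto
  have "SI M \<phi> t = SI M \<phi> s + integral {M s..M t} (\<lambda>u. \<phi> (ginv M u))"
    unfolding SI_def using Henstock_Kurzweil_Integration.integral_combine[OF m SI_int[OF M \<phi>]] by simp
  moreover have "\<bar>integral {M s..M t} (\<lambda>u. \<phi> (ginv M u)) - 0 * (M t - M s)\<bar> \<le> K * (M t - M s)"
    by (rule integral_spike_bound) (use SI_integrable[OF M \<phi>] m K0 K ginv_in in auto)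
  ultimately show ?thesis by simp
qed

lemma SI_lip_abs:
  fixes \<phi> :: "real \<Rightarrow> real"
  assumes M: "mono_on {0..1} M" and \<phi>: "continuous_on {0..1} \<phi>"
    and K: "\<And>s. s \<in> {0..1} \<Longrightarrow> \<bar>\<phi> s\<bar> \<le> K" and st: "s \<in> {0..1}" "t \<in> {0..1}"
  shows "\<bar>SI M \<phi> t - SI M \<phi> s\<bar> \<le> K * \<bar>M t - M s\<bar>"
proof (cases "s \<le> t")
  case True
  then have "M s \<le> M t" using mono_onD[OF M] st by auto
  then show ?thesis using SI_lip[OF M \<phi> K, of s t] st True by auto
next
  case False
  then have "M t \<le> M s" using mono_onD[OF M] st by auto
  then show ?thesis using SI_lip[OF M \<phi> K, of t s] st False by (auto simp: abs_minus_commute)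
qed

lemma SI_cong:
  fixes \<phi> \<psi> :: "real \<Rightarrow> real"
  assumes M: "mono_on {0..1} M" and t: "0 \<le> t" "t \<le> 1" and eq: "\<And>s. s \<in> {0..t} \<Longrightarrow> \<phi> s = \<psi> s"
  shows "SI M \<phi> t = SI M \<psi> t"
  unfolding SI_def
proof (rule integral_spike[of "{M t}"])
  show "negligible {M t}" by simp
  fix u assume u: "u \<in> {M 0..M t} - {M t}"
  then have "0 \<le> ginv M u" "ginv M u \<le> t" using ginv_between[OF M _ t(1) t(2), of u] by auto
  then show "\<psi> (ginv M u) = \<phi> (ginv M u)" using eq by auto
qed

lemma SI_cont:
  fixes \<phi> :: "real \<Rightarrow> real"
  assumes M: "mono_on {0..1} M" and Mc: "continuous_on {0..1} M" and \<phi>: "continuous_on {0..1} \<phi>"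
  shows "continuous_on {0..1} (SI M \<phi>)"
proof -
  have Fc: "continuous_on {M 0..M 1} (\<lambda>v. integral {M 0..v} (\<lambda>u. \<phi> (ginv M u)))"
    by (rule indefinite_integral_continuous_1[OF SI_int[OF M \<phi>]])
  have "continuous_on {0..1} (\<lambda>t. integral {M 0..M t} (\<lambda>u. \<phi> (ginv M u)))"
    by (rule continuous_on_compose2[OF Fc Mc]) (use mono_onD[OF M] in auto)
  then show ?thesis unfolding SI_def[abs_def] .
qed

lemma SI_exp:
  assumes M: "mono_on {0..1} M" and Mc: "continuous_on {0..1} M" and l: "l > 0" and t: "0 \<le> t" "t \<le> 1"
  shows "SI M (\<lambda>s. exp (l * M s)) t = (exp (l * M t) - exp (l * M 0)) / l"
proof -
  have m: "M 0 \<le> M t" "M t \<le> M 1" using mono_onD[OF M] t by auto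
  have "SI M (\<lambda>s. exp (l * M s)) t = integral {M 0..M t} (\<lambda>u. exp (l * u))"
    unfolding SI_def by (rule integral_cong) (use ginv_inverse[OF M Mc] m in auto)
  also have "\<dots> = exp (l * M t) / l - exp (l * M 0) / l"
  proof (rule integral_unique, rule fundamental_theorem_of_calculus[OF m(1)])
    fix x assume "x \<in> {M 0..M t}"
    have "((\<lambda>u. exp (l * u) / l) has_field_derivative exp (l * x)) (at x within {M 0..M t})"
      using l by (auto intro!: derivative_eq_intros simp: field_simps)
    then show "((\<lambda>u. exp (l * u) / l) has_vector_derivative exp (l * x)) (at x within {M 0..M t})"
      by (simp add: has_real_derivative_iff_has_vector_derivative)
  qed
  finally show ?thesis by (simp add: diff_divide_distrib)
qed

lemma SI_sum:
  fixes \<phi> :: "real \<Rightarrow> real"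
  assumes J: "finite J" and M: "\<And>j. j \<in> J \<Longrightarrow> mono_on {0..1} (M j)" and \<phi>: "continuous_on {0..1} \<phi>"
    and t: "0 \<le> t" "t \<le> 1"
  shows "(\<Sum>j\<in>J. SI (M j) \<phi> t) = SI (\<lambda>s. \<Sum>j\<in>J. M j s) \<phi> t"
proof -
  have W: "mono_on {0..1} (\<lambda>s. \<Sum>j\<in>J. M j s)"
  proof (rule mono_onI)
    fix r s :: real assume rs: "r \<in> {0..1}" "s \<in> {0..1}" "r \<le> s"
    show "(\<Sum>j\<in>J. M j r) \<le> (\<Sum>j\<in>J. M j s)"
    proof (rule sum_mono)
      fix j assume "j \<in> J"
      then show "M j r \<le> M j s" using mono_onD[OF M[of j] rs] by simp
    qed
  qed
  have "has_RS_integral \<phi> (\<lambda>s. \<Sum>j\<in>J. M j s) 0 t (\<Sum>j\<in>J. SI (M j) \<phi> t)"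
    by (rule RS_sum[OF J]) (use SI_RS[OF M \<phi> t] in auto)
  then show ?thesis using RS_unique[OF t(1) _ SI_RS[OF W \<phi> t]] by blast
qed

lemma gronwall:
  fixes D W :: "real \<Rightarrow> real" and a L :: real
  assumes W: "mono_on {0..1} W" and Wc: "continuous_on {0..1} W" and Dc: "continuous_on {0..1} D"
    and D0: "\<And>s. s \<in> {0..1} \<Longrightarrow> 0 \<le> D s" and a: "a \<ge> 0" and L: "L \<ge> 0"
    and H: "\<And>\<mu>. \<mu> \<ge> 0 \<Longrightarrow> (\<forall>s\<in>{0..1}. D s \<le> \<mu> * exp ((2*L+1) * W s)) \<Longrightarrow>
             (\<forall>t\<in>{0..1}. D t \<le> a + L * \<mu> * SI W (\<lambda>s. exp ((2*L+1) * W s)) t)"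
    and t: "t \<in> {0..1}"
  shows "D t \<le> 2 * a * exp ((2*L+1) * (W t - W 0))"
proof -
  define l where "l = 2*L+1"
  have l: "l > 0" using L unfolding l_def by simp
  define F where "F s = D s * exp (- l * W s)" for s
  have Fc: "continuous_on {0..1} F" unfolding F_def by (intro continuous_intros Dc Wc)
  obtain s0 where s0: "s0 \<in> {0..1}" "\<And>y. y \<in> {0..1} \<Longrightarrow> F y \<le> F s0"
    using continuous_attains_sup[OF compact_Icc _ Fc] by auto
  define \<mu> where "\<mu> = F s0"
  have mu0: "\<mu> \<ge> 0" unfolding \<mu>_def F_def using D0[OF s0(1)] by simp
  have DF: "D s = F s * exp (l * W s)" for s unfolding F_def by (simp add: exp_minus field_simps)
  have Db: "\<forall>s\<in>{0..1}. D s \<le> \<mu> * exp (l * W s)"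
  proof
    fix s :: real assume s: "s \<in> {0..1}"
    show "D s \<le> \<mu> * exp (l * W s)" unfolding DF[of s] \<mu>_def
      by (rule mult_right_mono[OF s0(2)[OF s]]) simp
  qed
  have H1: "D s0 \<le> a + L * \<mu> * SI W (\<lambda>s. exp (l * W s)) s0"
    using H[OF mu0] Db s0(1) unfolding l_def by blast
  define E where "E = exp (l * W s0)"
  have E: "E > 0" unfolding E_def by simp
  have "SI W (\<lambda>s. exp (l * W s)) s0 = (E - exp (l * W 0)) / l"
    unfolding E_def using SI_exp[OF W Wc l] s0(1) by auto
  also have "\<dots> \<le> E / l" using l by (simp add: divide_right_mono)
  finally have "L * \<mu> * SI W (\<lambda>s. exp (l * W s)) s0 \<le> L * \<mu> * (E / l)"
    using L mu0 by (intro mult_left_mono) auto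
  also have "L * \<mu> * (E / l) = (L / l) * (\<mu> * E)" by simp
  also have "\<dots> \<le> (1/2) * (\<mu> * E)"
    by (rule mult_right_mono) (use l L mu0 E in \<open>auto simp: l_def field_simps\<close>)
  finally have "D s0 \<le> a + (1/2) * (\<mu> * E)" using H1 by simp
  moreover have "D s0 = \<mu> * E" unfolding \<mu>_def E_def using DF by simp
  ultimately have muE: "\<mu> * E \<le> 2 * a" by simp
  have W0: "W 0 \<le> W s0" using mono_onD[OF W] s0(1) by auto
  have "D t \<le> \<mu> * exp (l * W t)" using Db t by blast
  also have "\<mu> * exp (l * W t) = (\<mu> * E) * exp (l * (W t - W s0))"
    unfolding E_def by (simp add: right_diff_distrib exp_diff)
  also have "\<dots> \<le> (2 * a) * exp (l * (W t - W s0))"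
    by (rule mult_right_mono[OF muE]) simp
  also have "\<dots> \<le> (2 * a) * exp (l * (W t - W 0))"
    using W0 l a by (intro mult_left_mono) (auto intro!: mult_left_mono)
  finally show ?thesis unfolding l_def by simp
qed

locale system =
  fixes J :: "'j set" and M :: "'j \<Rightarrow> real \<Rightarrow> real" and h :: "'j \<Rightarrow> real \<Rightarrow> real \<Rightarrow> real"
    and f :: "real \<Rightarrow> real" and c :: real
  assumes J: "finite J"
    and M: "\<And>j. j \<in> J \<Longrightarrow> mono_on {0..1} (M j)"
    and Mc: "\<And>j. j \<in> J \<Longrightarrow> continuous_on {0..1} (M j)"
    and hc: "\<And>j. j \<in> J \<Longrightarrow> continuous_on ({0..1} \<times> UNIV) (\<lambda>(t, \<xi>). h j t \<xi>)"
    and hg: "\<And>j t \<xi>. j \<in> J \<Longrightarrow> t \<in> {0..1} \<Longrightarrow> \<bar>h j t \<xi>\<bar> \<le> c * (1 + \<bar>\<xi>\<bar>)"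
    and c: "c \<ge> 0"
    and fc: "continuous_on {0..1} f"
begin

definition Top :: "real \<Rightarrow> (real \<Rightarrow> real) \<Rightarrow> real \<Rightarrow> real" where
  "Top \<delta> X t = f t + (\<Sum>j\<in>J. SI (M j) (\<lambda>s. h j s (X (max 0 (s - \<delta>)))) t)"

lemma comp_cont:
  assumes j: "j \<in> J" and X: "continuous_on {0..1} X" and \<rho>: "continuous_on {0..1} \<rho>"
    and \<rho>r: "\<And>s. s \<in> {0..1} \<Longrightarrow> \<rho> s \<in> {0..1}"
  shows "continuous_on {0..1} (\<lambda>s. h j s (X (\<rho> s)))"
proof -
  have i: "continuous_on {0..1} (\<lambda>s. (s, X (\<rho> s)))"
    by (intro continuous_intros continuous_on_compose2[OF X \<rho>]) (use \<rho>r in auto)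
  have "continuous_on {0..1} (\<lambda>s. (\<lambda>(t, \<xi>). h j t \<xi>) (s, X (\<rho> s)))"
    by (rule continuous_on_compose2[OF hc[OF j] i]) auto
  then show ?thesis by simp
qed

lemma delay_cont: "continuous_on {0..1} (\<lambda>s::real. max 0 (s - \<delta>))"
  by (intro continuous_intros)

lemma delay_range: "\<delta> \<ge> 0 \<Longrightarrow> s \<in> {0..1} \<Longrightarrow> max 0 (s - \<delta>) \<in> {0..1::real}"
  by auto

lemma Top_cont:
  assumes d: "\<delta> \<ge> 0" and X: "continuous_on {0..1} X"
  shows "continuous_on {0..1} (Top \<delta> X)"
proof -
  have "continuous_on {0..1} (\<lambda>t. f t + (\<Sum>j\<in>J. SI (M j) (\<lambda>s. h j s (X (max 0 (s - \<delta>)))) t))"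
  proof (intro continuous_on_add fc continuous_on_sum)
    fix j assume j: "j \<in> J"
    show "continuous_on {0..1} (\<lambda>t. SI (M j) (\<lambda>s. h j s (X (max 0 (s - \<delta>)))) t)"
      using SI_cont[OF M[OF j] Mc[OF j] comp_cont[OF j X delay_cont delay_range[OF d]]] by simp
  qed
  then show ?thesis unfolding Top_def[abs_def] .
qed

lemma Top_zero: "Top \<delta> X 0 = f 0"
  unfolding Top_def by (simp add: SI_zero)

lemma Top_local:
  assumes d: "\<delta> > 0" and eq: "\<And>r. r \<in> {0..1} \<Longrightarrow> r < real k * \<delta> \<or> r = 0 \<Longrightarrow> X r = Y r"
    and t: "t \<in> {0..1}" "t < real (Suc k) * \<delta> \<or> t = 0"
  shows "Top \<delta> X t = Top \<delta> Y t"
proof -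
  have "SI (M j) (\<lambda>s. h j s (X (max 0 (s - \<delta>)))) t = SI (M j) (\<lambda>s. h j s (Y (max 0 (s - \<delta>)))) t"
    if j: "j \<in> J" for j
  proof (rule SI_cong[OF M[OF j]])
    show "0 \<le> t" "t \<le> 1" using t by auto
    fix s assume s: "s \<in> {0..t}"
    have "max 0 (s - \<delta>) < real k * \<delta> \<or> max 0 (s - \<delta>) = 0"
    proof (cases "s - \<delta> \<le> 0")
      case False
      then have "t \<noteq> 0" using s d by auto
      then have "t < real (Suc k) * \<delta>" using t by auto
      then show ?thesis using s False by (auto simp: algebra_simps)
    qed simp
    then show "h j s (X (max 0 (s - \<delta>))) = h j s (Y (max 0 (s - \<delta>)))"
      using eq[of "max 0 (s - \<delta>)"] s t d by auto
  qed
  then show ?thesis unfolding Top_def by simp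
qed

lemma Top_iter_cont:
  assumes d: "\<delta> \<ge> 0" and X: "continuous_on {0..1} X"
  shows "continuous_on {0..1} ((Top \<delta> ^^ n) X)"
  by (induction n) (auto intro: Top_cont[OF d] X)

lemma Top_iter_local:
  assumes d: "\<delta> > 0"
  shows "\<And>X Y. continuous_on {0..1} X \<Longrightarrow> continuous_on {0..1} Y \<Longrightarrow> X 0 = Y 0 \<Longrightarrow>
     t \<in> {0..1} \<Longrightarrow> t < real n * \<delta> \<or> t = 0 \<Longrightarrow> (Top \<delta> ^^ n) X t = (Top \<delta> ^^ n) Y t"
proof (induction n arbitrary: t)
  case 0 then show ?case by auto
next
  case (Suc n)
  show ?case
    unfolding funpow.simps o_def
  proof (rule Top_local[OF d _ Suc.prems(4,5)])
    fix r assume "r \<in> {0..1}" "r < real n * \<delta> \<or> r = 0"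
    then show "(Top \<delta> ^^ n) X r = (Top \<delta> ^^ n) Y r" using Suc.IH[OF Suc.prems(1-3)] by blast
  qed
qed

lemma approx_solution:
  assumes d: "\<delta> > 0"
  obtains B where "continuous_on {0..1} B" "\<And>t. t \<in> {0..1} \<Longrightarrow> B t = Top \<delta> B t"
proof -
  obtain n :: nat where n: "real n * \<delta> > 1"
    using reals_Archimedean3[OF d] by blast
  define Z where "Z = (\<lambda>t::real. f 0)"
  have Zc: "continuous_on {0..1} Z" unfolding Z_def by simp
  have TZc: "continuous_on {0..1} (Top \<delta> Z)" using Top_cont[OF less_imp_le[OF d] Zc] .
  define B where "B = (Top \<delta> ^^ n) Z"
  show ?thesis
  proof (rule that)
    show "continuous_on {0..1} B" unfolding B_def by (rule Top_iter_cont[OF less_imp_le[OF d] Zc])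
    fix t :: real assume t: "t \<in> {0..1}"
    have "Top \<delta> B = (Top \<delta> ^^ n) (Top \<delta> Z)" unfolding B_def by (simp add: funpow_swap1)
    moreover have "(Top \<delta> ^^ n) (Top \<delta> Z) t = (Top \<delta> ^^ n) Z t"
      by (rule Top_iter_local[OF d TZc Zc]) (use t n Top_zero Z_def in auto)
    ultimately show "B t = Top \<delta> B t" unfolding B_def by simp
  qed
qed

end

context system begin

definition W :: "real \<Rightarrow> real" where "W s = (\<Sum>j\<in>J. M j s)"

lemma W_mono: "mono_on {0..1} W"
proof (rule mono_onI)
  fix r s :: real assume rs: "r \<in> {0..1}" "s \<in> {0..1}" "r \<le> s"
  show "W r \<le> W s" unfolding W_def
  proof (rule sum_mono)
    fix j assume "j \<in> J"
    then show "M j r \<le> M j s" using mono_onD[OF M[of j] rs] by simp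
  qed
qed

lemma W_cont: "continuous_on {0..1} W"
  unfolding W_def[abs_def] by (intro continuous_on_sum Mc)

lemma phi_cont:
  assumes d: "\<delta> \<ge> 0" and X: "continuous_on {0..1} X" and j: "j \<in> J"
  shows "continuous_on {0..1} (\<lambda>s. h j s (X (max 0 (s - \<delta>))))"
  by (rule comp_cont[OF j X delay_cont delay_range[OF d]])

lemma approx_bound:
  assumes d: "\<delta> \<ge> 0" and B: "continuous_on {0..1} B" and fp: "\<And>t. t \<in> {0..1} \<Longrightarrow> B t = Top \<delta> B t"
    and Fb: "\<And>s. s \<in> {0..1} \<Longrightarrow> \<bar>f s\<bar> \<le> Fb" and t: "t \<in> {0..1}"
  shows "\<bar>B t\<bar> \<le> 2 * (Fb + c * (W 1 - W 0)) * exp ((2*c+1) * (W 1 - W 0))"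
proof -
  define l where "l = 2*c+1"
  define a where "a = Fb + c * (W 1 - W 0)"
  have W01: "W 0 \<le> W 1" using mono_onD[OF W_mono] by auto
  have a0: "a \<ge> 0" unfolding a_def using Fb[of 0] c W01 by auto
  have g: "\<bar>B t\<bar> \<le> 2 * a * exp ((2*c+1) * (W t - W 0))"
  proof (rule gronwall[OF W_mono W_cont _ _ a0 c _ t])
    show "continuous_on {0..1} (\<lambda>s. \<bar>B s\<bar>)" by (intro continuous_intros B)
    show "\<And>s. s \<in> {0..1} \<Longrightarrow> 0 \<le> \<bar>B s\<bar>" by simp
    fix \<mu> :: real assume mu: "\<mu> \<ge> 0" and hb: "\<forall>s\<in>{0..1}. \<bar>B s\<bar> \<le> \<mu> * exp ((2*c+1) * W s)"
    show "\<forall>t\<in>{0..1}. \<bar>B t\<bar> \<le> a + c * \<mu> * SI W (\<lambda>s. exp ((2*c+1) * W s)) t"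
    proof
      fix t :: real assume t: "t \<in> {0..1}"
      define \<psi> where "\<psi> s = c + (c * \<mu>) * exp ((2*c+1) * W s)" for s
      have \<psi>c: "continuous_on {0..1} \<psi>" unfolding \<psi>_def[abs_def] by (intro continuous_intros W_cont)
      have e1: "continuous_on {0..1} (\<lambda>s. exp ((2*c+1) * W s))" by (intro continuous_intros W_cont)
      have pb: "\<bar>h j s (B (max 0 (s - \<delta>)))\<bar> \<le> \<psi> s" if j: "j \<in> J" and s: "s \<in> {0..1}" for j s
      proof -
        let ?r = "max 0 (s - \<delta>)"
        have r: "?r \<in> {0..1}" "?r \<le> s" using s d by auto
        have "W ?r \<le> W s" using mono_onD[OF W_mono r(1) s r(2)] .
        then have "exp ((2*c+1) * W ?r) \<le> exp ((2*c+1) * W s)" using c by (simp add: mult_left_mono)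
        then have "\<mu> * exp ((2*c+1) * W ?r) \<le> \<mu> * exp ((2*c+1) * W s)" using mu by (rule mult_left_mono)
        moreover have "\<bar>B ?r\<bar> \<le> \<mu> * exp ((2*c+1) * W ?r)" using hb r(1) by blast
        ultimately have "\<bar>B ?r\<bar> \<le> \<mu> * exp ((2*c+1) * W s)" by linarith
        then have "c * (1 + \<bar>B ?r\<bar>) \<le> c * (1 + \<mu> * exp ((2*c+1) * W s))" using c by (simp add: mult_left_mono)
        then show ?thesis using hg[OF j s, of "B ?r"] unfolding \<psi>_def by (simp add: algebra_simps)
      qed
      have sb: "\<bar>SI (M j) (\<lambda>s. h j s (B (max 0 (s - \<delta>)))) t\<bar> \<le> SI (M j) \<psi> t" if j: "j \<in> J" for j
      proof -
        have pc: "continuous_on {0..1} (\<lambda>s. h j s (B (max 0 (s - \<delta>))))" by (rule phi_cont[OF d B j])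
        have "\<bar>SI (M j) (\<lambda>s. h j s (B (max 0 (s - \<delta>)))) t\<bar> \<le> SI (M j) (\<lambda>s. \<bar>h j s (B (max 0 (s - \<delta>)))\<bar>) t"
          by (rule SI_abs[OF M[OF j] pc])
        also have "\<dots> \<le> SI (M j) \<psi> t"
          by (rule SI_mono[OF M[OF j] _ \<psi>c]) (use pc pb j in \<open>auto intro: continuous_intros\<close>)
        finally show ?thesis .
      qed
      have "\<bar>B t\<bar> = \<bar>f t + (\<Sum>j\<in>J. SI (M j) (\<lambda>s. h j s (B (max 0 (s - \<delta>)))) t)\<bar>"
        using fp[OF t] unfolding Top_def by simp
      also have "\<dots> \<le> \<bar>f t\<bar> + (\<Sum>j\<in>J. \<bar>SI (M j) (\<lambda>s. h j s (B (max 0 (s - \<delta>)))) t\<bar>)"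
        by (rule order_trans[OF abs_triangle_ineq add_left_mono[OF sum_abs]])
      also have "\<dots> \<le> Fb + (\<Sum>j\<in>J. SI (M j) \<psi> t)"
        by (rule add_mono[OF Fb[OF t] sum_mono]) (use sb in auto)
      also have "(\<Sum>j\<in>J. SI (M j) \<psi> t) = SI W \<psi> t"
        unfolding W_def[abs_def] by (rule SI_sum[OF J M \<psi>c]) (use t in auto)
      also have "SI W \<psi> t = SI W (\<lambda>s. c) t + SI W (\<lambda>s. (c * \<mu>) * exp ((2*c+1) * W s)) t"
        unfolding \<psi>_def by (rule SI_add[OF W_mono]) (intro continuous_intros W_cont)+
      also have "\<dots> = c * (W t - W 0) + (c * \<mu>) * SI W (\<lambda>s. exp ((2*c+1) * W s)) t"
        using SI_const[OF W_mono, of t c] SI_cmul[of W "c * \<mu>"] t by auto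
      also have "c * (W t - W 0) \<le> c * (W 1 - W 0)"
        using mono_onD[OF W_mono, of t 1] t c by (auto intro: mult_left_mono)
      finally show "\<bar>B t\<bar> \<le> a + c * \<mu> * SI W (\<lambda>s. exp ((2*c+1) * W s)) t"
        unfolding a_def by simp
    qed
  qed
  also have "2 * a * exp ((2*c+1) * (W t - W 0)) \<le> 2 * a * exp ((2*c+1) * (W 1 - W 0))"
    using mono_onD[OF W_mono, of t 1] t c a0 by (auto intro!: mult_left_mono)
  finally show ?thesis unfolding a_def .
qed

lemma approx_equi:
  assumes d: "\<delta> \<ge> 0" and B: "continuous_on {0..1} B" and fp: "\<And>t. t \<in> {0..1} \<Longrightarrow> B t = Top \<delta> B t"
    and R: "\<And>s. s \<in> {0..1} \<Longrightarrow> \<bar>B s\<bar> \<le> R" and t: "t \<in> {0..1}" and y: "y \<in> {0..1}"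
  shows "\<bar>B t - B y\<bar> \<le> \<bar>f t - f y\<bar> + c * (1 + R) * (\<Sum>j\<in>J. \<bar>M j t - M j y\<bar>)"
proof -
  have pb: "\<bar>h j s (B (max 0 (s - \<delta>)))\<bar> \<le> c * (1 + R)" if j: "j \<in> J" and s: "s \<in> {0..1}" for j s
  proof -
    have "\<bar>B (max 0 (s - \<delta>))\<bar> \<le> R" using R delay_range[OF d s] by blast
    then have "c * (1 + \<bar>B (max 0 (s - \<delta>))\<bar>) \<le> c * (1 + R)" using c by (simp add: mult_left_mono)
    then show ?thesis using hg[OF j s, of "B (max 0 (s - \<delta>))"] by linarith
  qed
  have eq: "B t - B y = (f t - f y) + (\<Sum>j\<in>J. SI (M j) (\<lambda>s. h j s (B (max 0 (s - \<delta>)))) t - SI (M j) (\<lambda>s. h j s (B (max 0 (s - \<delta>)))) y)"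
  proof -
    have "B t - B y = Top \<delta> B t - Top \<delta> B y" using fp[OF t] fp[OF y] by (simp only:)
    also have "\<dots> = (f t - f y) + (\<Sum>j\<in>J. SI (M j) (\<lambda>s. h j s (B (max 0 (s - \<delta>)))) t - SI (M j) (\<lambda>s. h j s (B (max 0 (s - \<delta>)))) y)"
      unfolding Top_def sum_subtractf by simp
    finally show ?thesis .
  qed
  have "\<bar>B t - B y\<bar> \<le> \<bar>f t - f y\<bar> + (\<Sum>j\<in>J. \<bar>SI (M j) (\<lambda>s. h j s (B (max 0 (s - \<delta>)))) t - SI (M j) (\<lambda>s. h j s (B (max 0 (s - \<delta>)))) y\<bar>)"
    unfolding eq by (rule order_trans[OF abs_triangle_ineq add_left_mono[OF sum_abs]])
  also have "\<dots> \<le> \<bar>f t - f y\<bar> + (\<Sum>j\<in>J. c * (1 + R) * \<bar>M j t - M j y\<bar>)"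
    by (rule add_left_mono, rule sum_mono, rule SI_lip_abs[OF M phi_cont[OF d B]]) (use pb t y in auto)
  finally show ?thesis by (simp add: sum_distrib_left)
qed

end

lemma eps_zero:
  fixes x C :: real
  assumes C: "C \<ge> 0" and H: "\<And>e. e > 0 \<Longrightarrow> \<bar>x\<bar> \<le> e * C"
  shows "x = 0"
proof -
  have "\<bar>x\<bar> \<le> 0 + e" if e: "e > 0" for e
  proof -
    have "\<bar>x\<bar> \<le> (e / (C + 1)) * C" using H[of "e / (C + 1)"] e C by simp
    also have "\<dots> \<le> e" using e C by (simp add: field_simps)
    finally show ?thesis by simp
  qed
  then have "\<bar>x\<bar> \<le> 0" by (rule field_le_epsilon)
  then show ?thesis by simp
qed

context system begin

theorem exists_solution:
  "\<exists>B. continuous_on {0..1} B \<and> (\<forall>t\<in>{0..1}. B t = f t + (\<Sum>j\<in>J. SI (M j) (\<lambda>s. h j s (B s)) t))"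
proof -
  obtain Fb where Fb: "Fb \<ge> 0" "\<And>s. s \<in> {0..1} \<Longrightarrow> \<bar>f s\<bar> \<le> Fb" using cont_bound[OF fc] by blast
  define R where "R = 2 * (Fb + c * (W 1 - W 0)) * exp ((2*c+1) * (W 1 - W 0))"
  define K where "K = c * (1 + R)"
  define dl where "dl N = 1 / (real N + 1)" for N :: nat
  have dl: "dl N > 0" for N unfolding dl_def by simp
  have "\<forall>N. \<exists>B. continuous_on {0..1} B \<and> (\<forall>t\<in>{0..1}. B t = Top (dl N) B t)"
  proof
    fix N
    obtain B where "continuous_on {0..1} B" "\<And>t. t \<in> {0..1} \<Longrightarrow> B t = Top (dl N) B t"
      using approx_solution[OF dl[of N]] by blast
    then show "\<exists>B. continuous_on {0..1} B \<and> (\<forall>t\<in>{0..1}. B t = Top (dl N) B t)" by blast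
  qed
  then obtain Bs where Bs1: "\<And>N. continuous_on {0..1} (Bs N)"
    and Bs2: "\<And>N t. t \<in> {0..1} \<Longrightarrow> Bs N t = Top (dl N) (Bs N) t"
    by metis
  have bnd: "\<bar>Bs N t\<bar> \<le> R" if "t \<in> {0..1}" for N t
    unfolding R_def by (rule approx_bound[OF less_imp_le[OF dl] Bs1 Bs2 Fb(2) that])
  have equi: "\<bar>Bs N t - Bs N y\<bar> \<le> \<bar>f t - f y\<bar> + K * (\<Sum>j\<in>J. \<bar>M j t - M j y\<bar>)"
    if "t \<in> {0..1}" "y \<in> {0..1}" for N t y
    unfolding K_def by (rule approx_equi[OF less_imp_le[OF dl] Bs1 Bs2 bnd that])
  have equic: "\<exists>d. 0 < d \<and> (\<forall>n y. y \<in> {0..1} \<and> norm (x - y) < d \<longrightarrow> norm (Bs n x - Bs n y) < e)"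
    if x: "x \<in> {0..1}" and e: "0 < e" for x e :: real
  proof -
    define G where "G y = \<bar>f x - f y\<bar> + K * (\<Sum>j\<in>J. \<bar>M j x - M j y\<bar>)" for y
    have Gc: "continuous_on {0..1} G" unfolding G_def[abs_def]
      by (intro continuous_intros fc continuous_on_sum) (auto intro: continuous_intros Mc)
    have G0: "G x = 0" unfolding G_def by simp
    obtain d where d: "d > 0" "\<forall>y\<in>{0..1}. dist y x < d \<longrightarrow> dist (G y) (G x) < e"
      using Gc x e unfolding continuous_on_iff by metis
    show ?thesis
    proof (intro exI[of _ d] conjI allI impI)
      show "0 < d" by fact
      fix n y assume y: "y \<in> {0..1} \<and> norm (x - y) < d"
      then have "G y < e" using d G0 by (auto simp: dist_real_def abs_minus_commute)
      moreover have "\<bar>Bs n x - Bs n y\<bar> \<le> G y" using equi[OF x, of y n] y unfolding G_def by auto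
      ultimately show "norm (Bs n x - Bs n y) < e" by simp
    qed
  qed
  obtain g k where g: "continuous_on {0..1} g" and k: "strict_mono (k :: nat \<Rightarrow> nat)"
    and gu: "\<And>e. 0 < e \<Longrightarrow> \<exists>N. \<forall>n x. n \<ge> N \<and> x \<in> {0..1} \<longrightarrow> norm (Bs (k n) x - g x) < e"
    using Arzela_Ascoli[of "{0..1::real}" Bs R] bnd equic by auto
  have gb: "\<bar>g s\<bar> \<le> R + 1" if s: "s \<in> {0..1}" for s
  proof -
    obtain N where "\<forall>n x. n \<ge> N \<and> x \<in> {0..1} \<longrightarrow> norm (Bs (k n) x - g x) < 1" using gu[of 1] by auto
    then have "\<bar>Bs (k N) s - g s\<bar> < 1" using s by auto
    then show ?thesis using bnd[OF s, of "k N"] by linarith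
  qed
  have conv: "eventually (\<lambda>n. \<forall>s\<in>{0..1}. \<bar>h j s (Bs (k n) (max 0 (s - dl (k n)))) - h j s (g s)\<bar> \<le> e) sequentially"
    if j: "j \<in> J" and e: "e > 0" for j e
  proof -
    define KK where "KK = {0..1::real} \<times> {-(R+1)..R+1::real}"
    have cKK: "compact KK" unfolding KK_def by (intro compact_Times compact_Icc)
    have "continuous_on KK (\<lambda>(t, \<xi>). h j t \<xi>)"
      by (rule continuous_on_subset[OF hc[OF j]]) (auto simp: KK_def)
    then have "uniformly_continuous_on KK (\<lambda>(t, \<xi>). h j t \<xi>)"
      by (rule compact_uniformly_continuous[OF _ cKK])
    then obtain \<eta> where \<eta>: "\<eta> > 0"
      "\<forall>p\<in>KK. \<forall>p'\<in>KK. dist p' p < \<eta> \<longrightarrow> dist ((\<lambda>(t, \<xi>). h j t \<xi>) p') ((\<lambda>(t, \<xi>). h j t \<xi>) p) < e"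
      unfolding uniformly_continuous_on_def using e by metis
    have "uniformly_continuous_on {0..1} g" by (rule compact_uniformly_continuous[OF g compact_Icc])
    then obtain \<rho> where \<rho>: "\<rho> > 0" "\<forall>x\<in>{0..1}. \<forall>x'\<in>{0..1}. dist x' x < \<rho> \<longrightarrow> dist (g x') (g x) < \<eta>/2"
      unfolding uniformly_continuous_on_def using \<eta>(1) by (metis half_gt_zero)
    obtain N1 where N1: "\<forall>n x. n \<ge> N1 \<and> x \<in> {0..1} \<longrightarrow> norm (Bs (k n) x - g x) < \<eta>/2"
      using gu[of "\<eta>/2"] \<eta>(1) by auto
    obtain N2 :: nat where N2: "N2 > 0" "inverse (real N2) < \<rho>" using ex_inverse_of_nat_less[OF \<rho>(1)] by auto
    show ?thesis unfolding eventually_sequentially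
    proof (intro exI[of _ "max N1 N2"] allI impI ballI)
      fix n :: nat and s :: real assume n: "max N1 N2 \<le> n" and s: "s \<in> {0..1}"
      define r where "r = max 0 (s - dl (k n))"
      have kn: "n \<le> k n" using seq_suble[OF k] .
      have "dl (k n) \<le> inverse (real N2)"
        unfolding dl_def using n kn N2(1) by (auto simp: field_simps)
      then have dlk: "dl (k n) < \<rho>" using N2(2) by simp
      have r: "r \<in> {0..1}" "r \<le> s" "s - r \<le> dl (k n)" using s dl[of "k n"] unfolding r_def by auto
      have 1: "\<bar>Bs (k n) r - g r\<bar> < \<eta>/2" using N1 n r(1) by auto
      have 2: "\<bar>g r - g s\<bar> < \<eta>/2" using \<rho>(2) r s dlk by (auto simp: dist_real_def)
      have 3: "\<bar>Bs (k n) r - g s\<bar> < \<eta>" using 1 2 by linarith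
      have p1: "(s, Bs (k n) r) \<in> KK" using bnd[OF r(1), of "k n"] s unfolding KK_def by auto
      have p2: "(s, g s) \<in> KK" using gb[OF s] s unfolding KK_def by auto
      have "dist (s, Bs (k n) r) (s, g s) < \<eta>" using 3 by (simp add: dist_Pair_Pair dist_real_def)
      then have "dist (h j s (Bs (k n) r)) (h j s (g s)) < e" using \<eta>(2) p1 p2 by fastforce
      then show "\<bar>h j s (Bs (k n) (max 0 (s - dl (k n)))) - h j s (g s)\<bar> \<le> e"
        unfolding r_def[symmetric] by (simp add: dist_real_def)
    qed
  qed
  define C where "C = (\<Sum>j\<in>J. M j 1 - M j 0)"
  have C: "C \<ge> 0" unfolding C_def by (rule sum_nonneg) (use mono_onD[OF M] in auto)
  have \<psi>c: "continuous_on {0..1} (\<lambda>s. h j s (g s))" if j: "j \<in> J" for j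
    using comp_cont[OF j g continuous_on_id] by simp
  have sol: "g t = f t + (\<Sum>j\<in>J. SI (M j) (\<lambda>s. h j s (g s)) t)" if t: "t \<in> {0..1}" for t
  proof -
    define x where "x = g t - (f t + (\<Sum>j\<in>J. SI (M j) (\<lambda>s. h j s (g s)) t))"
    have "x = 0"
    proof (rule eps_zero[of "1 + C"])
      show "1 + C \<ge> 0" using C by simp
      fix e :: real assume e: "e > 0"
      have ev: "eventually (\<lambda>n. (\<forall>j\<in>J. \<forall>s\<in>{0..1}. \<bar>h j s (Bs (k n) (max 0 (s - dl (k n)))) - h j s (g s)\<bar> \<le> e)
                 \<and> \<bar>Bs (k n) t - g t\<bar> < e) sequentially"
      proof (rule eventually_conj)
        show "eventually (\<lambda>n. \<forall>j\<in>J. \<forall>s\<in>{0..1}. \<bar>h j s (Bs (k n) (max 0 (s - dl (k n)))) - h j s (g s)\<bar> \<le> e) sequentially"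
          by (rule eventually_ball_finite[OF J]) (use conv[OF _ e] in blast)
        obtain N where "\<forall>n x. n \<ge> N \<and> x \<in> {0..1} \<longrightarrow> norm (Bs (k n) x - g x) < e" using gu[OF e] by blast
        then show "eventually (\<lambda>n. \<bar>Bs (k n) t - g t\<bar> < e) sequentially"
          unfolding eventually_sequentially using t by auto
      qed
      then obtain n where n1: "\<And>j s. j \<in> J \<Longrightarrow> s \<in> {0..1} \<Longrightarrow> \<bar>h j s (Bs (k n) (max 0 (s - dl (k n)))) - h j s (g s)\<bar> \<le> e"
        and n2: "\<bar>Bs (k n) t - g t\<bar> < e"
        unfolding eventually_sequentially by blast
      define N where "N = k n"
      define \<phi> where "\<phi> j s = h j s (Bs N (max 0 (s - dl N)))" for j s
      have \<phi>c: "continuous_on {0..1} (\<phi> j)" if j: "j \<in> J" for j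
        unfolding \<phi>_def using phi_cont[OF less_imp_le[OF dl] Bs1 j] .
      have BN: "Bs N t = f t + (\<Sum>j\<in>J. SI (M j) (\<phi> j) t)"
        using Bs2[OF t, of N] unfolding Top_def \<phi>_def by simp
      have xeq: "x = (g t - Bs N t) + (\<Sum>j\<in>J. SI (M j) (\<phi> j) t - SI (M j) (\<lambda>s. h j s (g s)) t)"
        unfolding x_def BN by (simp add: sum_subtractf)
      have tb: "\<bar>SI (M j) (\<phi> j) t - SI (M j) (\<lambda>s. h j s (g s)) t\<bar> \<le> e * (M j 1 - M j 0)" if j: "j \<in> J" for j
      proof -
        have dc: "continuous_on {0..1} (\<lambda>s. \<phi> j s - h j s (g s))" by (intro continuous_intros \<phi>c[OF j] \<psi>c[OF j])
        have "SI (M j) (\<phi> j) t - SI (M j) (\<lambda>s. h j s (g s)) t = SI (M j) (\<lambda>s. \<phi> j s - h j s (g s)) t"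
          by (rule SI_diff[OF M[OF j] \<phi>c[OF j] \<psi>c[OF j], symmetric])
        also have "\<bar>\<dots>\<bar> \<le> SI (M j) (\<lambda>s. \<bar>\<phi> j s - h j s (g s)\<bar>) t" by (rule SI_abs[OF M[OF j] dc])
        also have "\<dots> \<le> SI (M j) (\<lambda>s. e) t"
          by (rule SI_mono[OF M[OF j]]) (use dc n1[OF j] in \<open>auto intro: continuous_intros simp: \<phi>_def N_def\<close>)
        also have "\<dots> = e * (M j t - M j 0)" using SI_const[OF M[OF j], of t e] t by auto
        also have "\<dots> \<le> e * (M j 1 - M j 0)" using mono_onD[OF M[OF j], of t 1] t e by auto
        finally show ?thesis .
      qed
      have "\<bar>x\<bar> \<le> \<bar>g t - Bs N t\<bar> + (\<Sum>j\<in>J. \<bar>SI (M j) (\<phi> j) t - SI (M j) (\<lambda>s. h j s (g s)) t\<bar>)"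
        unfolding xeq by (rule order_trans[OF abs_triangle_ineq add_left_mono[OF sum_abs]])
      also have "\<dots> \<le> e + (\<Sum>j\<in>J. e * (M j 1 - M j 0))"
        by (rule add_mono) (use n2 tb N_def in \<open>auto intro: sum_mono simp: abs_minus_commute\<close>)
      also have "\<dots> = e * (1 + C)" unfolding C_def by (simp add: sum_distrib_left algebra_simps)
      finally show "\<bar>x\<bar> \<le> e * (1 + C)" .
    qed
    then show ?thesis unfolding x_def by simp
  qed
  show ?thesis using g sol by blast
qed

end

lemma decomp:
  assumes Ac: "continuous_on {0..1} A" and Abv: "bounded_variation_on A 0 1"
  shows "\<exists>P N. mono_on {0..1} P \<and> mono_on {0..1} N \<and> continuous_on {0..1} P \<and> continuous_on {0..1} N
           \<and> (\<forall>s. A s = P s - N s)"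
proof -
  obtain Mb where Mb: "\<And>n x. is_partition 0 1 n x \<Longrightarrow> psum A n x \<le> Mb"
    using Abv unfolding bounded_variation_on_def psum_def by blast
  interpret bvfun A Mb by (unfold_locales) (rule Mb)
  define V where "V t = var A 0 t" for t
  have Vd: "V s - V r \<ge> \<bar>A s - A r\<bar>" if "r \<in> {0..1}" "s \<in> {0..1}" "r \<le> s" for r s
    using var_add[of 0 r s] var_diff[of r s] that unfolding V_def by auto
  have Vc: "continuous_on {0..1} V" unfolding V_def[abs_def] by (rule var_cont[OF Ac])
  have m1: "mono_on {0..1} (\<lambda>s. (V s + A s) / 2)"
    by (rule mono_onI) (use Vd in fastforce)
  have m2: "mono_on {0..1} (\<lambda>s. (V s - A s) / 2)"
    by (rule mono_onI) (use Vd in fastforce)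
  have c1: "continuous_on {0..1} (\<lambda>s. (V s + A s) / 2)" by (intro continuous_intros Vc Ac) auto
  have c2: "continuous_on {0..1} (\<lambda>s. (V s - A s) / 2)" by (intro continuous_intros Vc Ac) auto
  have e: "\<forall>s. A s = (V s + A s) / 2 - (V s - A s) / 2" by (simp add: field_simps)
  show ?thesis using m1 m2 c1 c2 e by blast
qed

theorem proposition3p3:
  fixes d :: nat and A :: "nat \<Rightarrow> real \<Rightarrow> real" and f :: "real \<Rightarrow> real"
    and g :: "nat \<Rightarrow> real \<Rightarrow> real \<Rightarrow> real" and c :: real
  assumes A_cont: "\<And>i. i < d \<Longrightarrow> continuous_on {0..1} (A i)"
    and A_bv: "\<And>i. i < d \<Longrightarrow> bounded_variation_on (A i) 0 1"
    and f_cont: "continuous_on {0..1} f"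
    and g_cont: "\<And>i. i < d \<Longrightarrow> continuous_on ({0..1} \<times> UNIV) (\<lambda>(t, \<xi>). g i t \<xi>)"
    and c_nonneg: "c \<ge> 0"
    and growth: "\<And>i t \<xi>. i < d \<Longrightarrow> t \<in> {0..1} \<Longrightarrow> \<bar>g i t \<xi>\<bar> \<le> c * (1 + \<bar>\<xi>\<bar>)"
  shows "(\<exists>B. continuous_on {0..1} B \<and> is_solution d A f g B) \<and>
         ((\<forall>p>0. \<exists>L\<ge>0. \<forall>i<d. \<forall>\<xi>\<in>{-p..p}. \<forall>\<zeta>\<in>{-p..p}. \<forall>t\<in>{0..1}.
              \<bar>g i t \<xi> - g i t \<zeta>\<bar> \<le> L * \<bar>\<xi> - \<zeta>\<bar>) \<longrightarrow>
          (\<forall>B1 B2. continuous_on {0..1} B1 \<and> is_solution d A f g B1 \<and>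
                   continuous_on {0..1} B2 \<and> is_solution d A f g B2 \<longrightarrow>
                   (\<forall>t\<in>{0..1}. B1 t = B2 t)))"
proof -
  have "\<forall>i. \<exists>P N. i < d \<longrightarrow> (mono_on {0..1} P \<and> mono_on {0..1} N \<and> continuous_on {0..1} P \<and> continuous_on {0..1} N
           \<and> (\<forall>s. A i s = P s - N s))"
    using decomp[OF A_cont A_bv] by blast
  then obtain P N where PN: "\<And>i. i < d \<Longrightarrow> mono_on {0..1} (P i) \<and> mono_on {0..1} (N i) \<and>
      continuous_on {0..1} (P i) \<and> continuous_on {0..1} (N i) \<and> (\<forall>s. A i s = P i s - N i s)"
    by metis
  define J where "J = {..<d} \<times> (UNIV :: bool set)"
  define MM where "MM = (\<lambda>(i, b). if b then P i else N i)"
  define hh where "hh = (\<lambda>(i::nat, b::bool). if b then g i else (\<lambda>t \<xi>. - g i t \<xi>))"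
  have gneg: "continuous_on ({0..1} \<times> UNIV) (\<lambda>(t, \<xi>). - g i t \<xi>)" if i: "i < d" for i
  proof -
    have "continuous_on ({0..1} \<times> UNIV) (\<lambda>x. - (\<lambda>(t, \<xi>). g i t \<xi>) x)"
      by (intro continuous_on_minus g_cont[OF i])
    then show ?thesis by (simp add: case_prod_beta)
  qed
  interpret S: system J MM hh f c
  proof (unfold_locales)
    show "finite J" unfolding J_def by simp
    fix j assume j: "j \<in> J"
    then obtain i b where ib: "j = (i, b)" "i < d" unfolding J_def by auto
    show "mono_on {0..1} (MM j)" using PN[OF ib(2)] unfolding ib MM_def by auto
    show "continuous_on {0..1} (MM j)" using PN[OF ib(2)] unfolding ib MM_def by auto
    show "continuous_on ({0..1} \<times> UNIV) (\<lambda>(t, \<xi>). hh j t \<xi>)"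
      using g_cont[OF ib(2)] gneg[OF ib(2)] unfolding ib hh_def by auto
    fix t \<xi> :: real assume t: "t \<in> {0..1}"
    show "\<bar>hh j t \<xi>\<bar> \<le> c * (1 + \<bar>\<xi>\<bar>)" using growth[OF ib(2) t] unfolding ib hh_def by auto
  qed (use c_nonneg f_cont in auto)
  have gc: "continuous_on {0..1} (\<lambda>s. g i s (X s))" if i: "i < d" and X: "continuous_on {0..1} X" for i X
  proof -
    have "continuous_on {0..1} (\<lambda>s. (\<lambda>(t, \<xi>). g i t \<xi>) (s, X s))"
      by (rule continuous_on_compose2[OF g_cont[OF i]]) (auto intro!: continuous_intros X)
    then show ?thesis by simp
  qed
  have conv: "(\<Sum>j\<in>J. SI (MM j) (\<lambda>s. hh j s (X s)) t) =
      (\<Sum>i<d. SI (P i) (\<lambda>s. g i s (X s)) t - SI (N i) (\<lambda>s. g i s (X s)) t)" for X t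
  proof -
    have "(\<Sum>j\<in>J. SI (MM j) (\<lambda>s. hh j s (X s)) t) = (\<Sum>i<d. \<Sum>b\<in>UNIV. SI (MM (i, b)) (\<lambda>s. hh (i, b) s (X s)) t)"
      unfolding J_def by (simp add: sum.cartesian_product)
    also have "\<dots> = (\<Sum>i<d. SI (P i) (\<lambda>s. g i s (X s)) t - SI (N i) (\<lambda>s. g i s (X s)) t)"
      by (rule sum.cong) (auto simp: UNIV_bool MM_def hh_def SI_neg)
    finally show ?thesis .
  qed
  have RSrep: "has_RS_integral (\<lambda>s. g i s (X s)) (A i) 0 t (SI (P i) (\<lambda>s. g i s (X s)) t - SI (N i) (\<lambda>s. g i s (X s)) t)"
    if i: "i < d" and X: "continuous_on {0..1} X" and t: "0 \<le> t" "t \<le> 1" for i X t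
  proof -
    have "has_RS_integral (\<lambda>s. g i s (X s)) (\<lambda>s. P i s - N i s) 0 t (SI (P i) (\<lambda>s. g i s (X s)) t - SI (N i) (\<lambda>s. g i s (X s)) t)"
      using PN[OF i] by (intro RS_diff SI_RS gc[OF i X] t) auto
    moreover have "(\<lambda>s. P i s - N i s) = A i" using PN[OF i] by auto
    ultimately show ?thesis by simp
  qed
  have solJ: "B t = f t + (\<Sum>j\<in>J. SI (MM j) (\<lambda>s. hh j s (B s)) t)"
    if B: "continuous_on {0..1} B" "is_solution d A f g B" and t: "t \<in> {0..1}" for B t
  proof -
    have "B t = f t + (\<Sum>i<d. RS_integral (\<lambda>s. g i s (B s)) (A i) 0 t)"
      using B(2) t unfolding is_solution_def by blast
    also have "(\<Sum>i<d. RS_integral (\<lambda>s. g i s (B s)) (A i) 0 t) =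
        (\<Sum>i<d. SI (P i) (\<lambda>s. g i s (B s)) t - SI (N i) (\<lambda>s. g i s (B s)) t)"
      by (rule sum.cong) (use RS_integral_eq(1)[OF _ RSrep[OF _ B(1)]] t in auto)
    finally show ?thesis unfolding conv by simp
  qed
  have exist: "\<exists>B. continuous_on {0..1} B \<and> is_solution d A f g B"
  proof -
    obtain B where B: "continuous_on {0..1} B"
      "\<And>t. t \<in> {0..1} \<Longrightarrow> B t = f t + (\<Sum>j\<in>J. SI (MM j) (\<lambda>s. hh j s (B s)) t)"
      using S.exists_solution by blast
    have "is_solution d A f g B" unfolding is_solution_def
    proof (intro ballI conjI allI impI)
      fix t :: real and i assume t: "t \<in> {0..1}" and i: "i < d"
      show "RS_integrable (\<lambda>s. g i s (B s)) (A i) 0 t"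
        using RS_integral_eq(2)[OF _ RSrep[OF i B(1)]] t by auto
    next
      fix t :: real assume t: "t \<in> {0..1}"
      have "(\<Sum>i<d. RS_integral (\<lambda>s. g i s (B s)) (A i) 0 t) =
          (\<Sum>i<d. SI (P i) (\<lambda>s. g i s (B s)) t - SI (N i) (\<lambda>s. g i s (B s)) t)"
        by (rule sum.cong) (use RS_integral_eq(1)[OF _ RSrep[OF _ B(1)]] t in auto)
      then show "B t = f t + (\<Sum>i<d. RS_integral (\<lambda>s. g i s (B s)) (A i) 0 t)"
        using B(2)[OF t] unfolding conv by simp
    qed
    then show ?thesis using B(1) by blast
  qed
  have uniq: "\<forall>B1 B2. continuous_on {0..1} B1 \<and> is_solution d A f g B1 \<and>
                   continuous_on {0..1} B2 \<and> is_solution d A f g B2 \<longrightarrow>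
                   (\<forall>t\<in>{0..1}. B1 t = B2 t)"
    if Lip: "\<forall>p>0. \<exists>L\<ge>0. \<forall>i<d. \<forall>\<xi>\<in>{-p..p}. \<forall>\<zeta>\<in>{-p..p}. \<forall>t\<in>{0..1}.
              \<bar>g i t \<xi> - g i t \<zeta>\<bar> \<le> L * \<bar>\<xi> - \<zeta>\<bar>"
  proof (intro allI impI ballI)
    fix B1 B2 and t :: real
    assume BB: "continuous_on {0..1} B1 \<and> is_solution d A f g B1 \<and> continuous_on {0..1} B2 \<and> is_solution d A f g B2"
      and t: "t \<in> {0..1}"
    then have B1: "continuous_on {0..1} B1" "is_solution d A f g B1"
      and B2: "continuous_on {0..1} B2" "is_solution d A f g B2" by auto
    obtain K1 where K1: "K1 \<ge> 0" "\<And>s. s \<in> {0..1} \<Longrightarrow> \<bar>B1 s\<bar> \<le> K1" using cont_bound[OF B1(1)] by blast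
    obtain K2 where K2: "K2 \<ge> 0" "\<And>s. s \<in> {0..1} \<Longrightarrow> \<bar>B2 s\<bar> \<le> K2" using cont_bound[OF B2(1)] by blast
    obtain L where L: "L \<ge> 0" "\<forall>i<d. \<forall>\<xi>\<in>{-(K1+K2+1)..K1+K2+1}. \<forall>\<zeta>\<in>{-(K1+K2+1)..K1+K2+1}. \<forall>t\<in>{0..1}.
              \<bar>g i t \<xi> - g i t \<zeta>\<bar> \<le> L * \<bar>\<xi> - \<zeta>\<bar>"
    proof -
      have "K1 + K2 + 1 > 0" using K1(1) K2(1) by simp
      then show ?thesis using Lip that by blast
    qed
    define D where "D s = \<bar>B1 s - B2 s\<bar>" for s
    have Dc: "continuous_on {0..1} D" unfolding D_def[abs_def] by (intro continuous_intros B1(1) B2(1))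
    have LDc: "continuous_on {0..1} (\<lambda>s. L * D s)" by (intro continuous_intros Dc)
    have hlip: "\<bar>hh j s (B1 s) - hh j s (B2 s)\<bar> \<le> L * D s" if j: "j \<in> J" and s: "s \<in> {0..1}" for j s
    proof -
      obtain i b where ib: "j = (i, b)" "i < d" using j unfolding J_def by auto
      have "\<bar>g i s (B1 s) - g i s (B2 s)\<bar> \<le> L * \<bar>B1 s - B2 s\<bar>"
      proof -
        have m1: "B1 s \<in> {-(K1+K2+1)..K1+K2+1}" using K1(2)[OF s] K2(1) by (auto simp: abs_le_iff)
        have m2: "B2 s \<in> {-(K1+K2+1)..K1+K2+1}" using K2(2)[OF s] K1(1) by (auto simp: abs_le_iff)
        show ?thesis using L(2)[rule_format, OF ib(2) m1 m2 s] .
      qed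
      then show ?thesis unfolding ib hh_def D_def by (cases b) (auto simp: abs_minus_commute)
    qed
    have hc1: "continuous_on {0..1} (\<lambda>s. hh j s (X s))" if j: "j \<in> J" and X: "continuous_on {0..1} X" for j X
      using S.comp_cont[OF j X continuous_on_id] by simp
    have Dbound: "D t \<le> SI S.W (\<lambda>s. L * D s) t" if t: "t \<in> {0..1}" for t
    proof -
      have "B1 t - B2 t = (\<Sum>j\<in>J. SI (MM j) (\<lambda>s. hh j s (B1 s)) t - SI (MM j) (\<lambda>s. hh j s (B2 s)) t)"
        using solJ[OF B1 t] solJ[OF B2 t] by (simp add: sum_subtractf)
      also have "\<dots> = (\<Sum>j\<in>J. SI (MM j) (\<lambda>s. hh j s (B1 s) - hh j s (B2 s)) t)"
        by (rule sum.cong[OF refl], rule SI_diff[symmetric]) (use S.M hc1 B1(1) B2(1) in auto)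
      finally have eq: "D t = \<bar>\<Sum>j\<in>J. SI (MM j) (\<lambda>s. hh j s (B1 s) - hh j s (B2 s)) t\<bar>"
        unfolding D_def by simp
      have "\<dots> \<le> (\<Sum>j\<in>J. \<bar>SI (MM j) (\<lambda>s. hh j s (B1 s) - hh j s (B2 s)) t\<bar>)" by (rule sum_abs)
      also have "\<dots> \<le> (\<Sum>j\<in>J. SI (MM j) (\<lambda>s. L * D s) t)"
      proof (rule sum_mono)
        fix j assume j: "j \<in> J"
        have dc: "continuous_on {0..1} (\<lambda>s. hh j s (B1 s) - hh j s (B2 s))"
          by (intro continuous_intros hc1[OF j B1(1)] hc1[OF j B2(1)])
        have "\<bar>SI (MM j) (\<lambda>s. hh j s (B1 s) - hh j s (B2 s)) t\<bar> \<le> SI (MM j) (\<lambda>s. \<bar>hh j s (B1 s) - hh j s (B2 s)\<bar>) t"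
          by (rule SI_abs[OF S.M[OF j] dc])
        also have "\<dots> \<le> SI (MM j) (\<lambda>s. L * D s) t"
          by (rule SI_mono[OF S.M[OF j] _ LDc]) (use dc hlip[OF j] in \<open>auto intro: continuous_intros\<close>)
        finally show "\<bar>SI (MM j) (\<lambda>s. hh j s (B1 s) - hh j s (B2 s)) t\<bar> \<le> SI (MM j) (\<lambda>s. L * D s) t" .
      qed
      also have "\<dots> = SI S.W (\<lambda>s. L * D s) t"
        unfolding S.W_def[abs_def] by (rule SI_sum[OF S.J S.M LDc]) (use t in auto)
      finally show ?thesis using eq by simp
    qed
    have "D t \<le> 2 * 0 * exp ((2*L+1) * (S.W t - S.W 0))"
    proof (rule gronwall[OF S.W_mono S.W_cont Dc _ _ L(1) _ t])
      show "\<And>s. s \<in> {0..1} \<Longrightarrow> 0 \<le> D s" unfolding D_def by simp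
      show "(0::real) \<le> 0" by simp
      fix \<mu> :: real assume mu: "\<mu> \<ge> 0" and hb: "\<forall>s\<in>{0..1}. D s \<le> \<mu> * exp ((2*L+1) * S.W s)"
      show "\<forall>t\<in>{0..1}. D t \<le> 0 + L * \<mu> * SI S.W (\<lambda>s. exp ((2*L+1) * S.W s)) t"
      proof
        fix t :: real assume t: "t \<in> {0..1}"
        have ec: "continuous_on {0..1} (\<lambda>s. (L * \<mu>) * exp ((2*L+1) * S.W s))"
          by (intro continuous_intros S.W_cont)
        have "D t \<le> SI S.W (\<lambda>s. L * D s) t" by (rule Dbound[OF t])
        also have "\<dots> \<le> SI S.W (\<lambda>s. (L * \<mu>) * exp ((2*L+1) * S.W s)) t"
        proof (rule SI_mono[OF S.W_mono LDc ec])
          fix s :: real assume "s \<in> {0..1}"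
          then have "L * D s \<le> L * (\<mu> * exp ((2*L+1) * S.W s))" using hb L(1) by (simp add: mult_left_mono)
          then show "L * D s \<le> (L * \<mu>) * exp ((2*L+1) * S.W s)" by (simp add: mult.assoc)
        qed
        also have "\<dots> = L * \<mu> * SI S.W (\<lambda>s. exp ((2*L+1) * S.W s)) t" by (rule SI_cmul)
        finally show "D t \<le> 0 + L * \<mu> * SI S.W (\<lambda>s. exp ((2*L+1) * S.W s)) t" by simp
      qed
    qed
    then show "B1 t = B2 t" unfolding D_def by simp
  qed
  show ?thesis using exist uniq by blast
qed

end
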